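(* Let $\mathbb{K}=\mathbb{R}$ or $\mathbb{C}$, let $n>r\ge1$ be integers, let $X$ be a real symmetric $n\times n$ matrix with eigenvalues $\lambda_1,\ldots,\lambda_n$, and let $\theta_1,\ldots,\theta_r$ be nonzero real numbers. Assume: (H) $\lambda_1,\ldots,\lambda_n$ are pairwise distinct, and there are pairwise distinct indices $i_1,\ldots,i_{r-1}\in\{1,\ldots,n\}$ such that $\{\lambda_{i_1}+\theta_1,\ldots,\lambda_{i_{r-1}}+\theta_{r-1}\}\cap\{\lambda_1,\ldots,\lambda_n\}=\emptyset$. For $g=[g_1,\ldots,g_r]\in\mathbb{K}^{n\times r}$ define $\widetilde X_g=X+\sum_{i=1}^r\theta_iu_iu_i^*$, where either $(u_1,\ldots,u_r)=\frac1{\sqrt n}(g_1,\ldots,g_r)$ for all $g$, or $(u_1,\ldots,u_r)$ is the orthonormal family obtained from the columns of $g$ by the Gram–Schmidt process (defined when these columns are linearly independent). Then, in either case, the set of $g\in\mathbb{K}^{n\times r}$ such that $\widetilde X_g$ is defined and $\widetilde X_g$ and $X$ have at least one eigenvalue in common has Lebesgue measure zero.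
   Context: Lebesgue measure on $\mathbb{K}^{n\times r}$ is that of $\mathbb{R}^{nr}$ (if $\mathbb{K}=\mathbb{R}$) or $\mathbb{R}^{2nr}$ (if $\mathbb{K}=\mathbb{C}$) via real coordinates. Gram–Schmidt is with respect to $\langle v,w\rangle=\sum_k\overline{v_k}w_k$. *)

theory Defs
  imports "HOL-Analysis.Analysis"
begin

text \<open>n x n matrices are represented as functions nat => nat => 'a (entries (a,b) with a,b < n);
  vectors in K^n as functions nat => 'a (entries a < n); indices are 0-based.\<close>

definition is_eigenvalue :: "nat \<Rightarrow> (nat \<Rightarrow> nat \<Rightarrow> 'a::field) \<Rightarrow> 'a \<Rightarrow> bool" where
  "is_eigenvalue n A \<mu> \<longleftrightarrow>
     (\<exists>v. (\<exists>a<n. v a \<noteq> 0) \<and> (\<forall>a<n. (\<Sum>b<n. A a b * v b) = \<mu> * v a))"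

definition lin_indep_cols :: "nat \<Rightarrow> nat \<Rightarrow> (nat \<Rightarrow> nat \<Rightarrow> 'a::field) \<Rightarrow> bool" where
  "lin_indep_cols n r c \<longleftrightarrow>
     (\<forall>\<alpha>. (\<forall>a<n. (\<Sum>j<r. \<alpha> j * c j a) = 0) \<longrightarrow> (\<forall>j<r. \<alpha> j = 0))"

definition cinner :: "nat \<Rightarrow> (nat \<Rightarrow> complex) \<Rightarrow> (nat \<Rightarrow> complex) \<Rightarrow> complex" where
  "cinner n v w = (\<Sum>k<n. cnj (v k) * w k)"

definition cnorm :: "nat \<Rightarrow> (nat \<Rightarrow> complex) \<Rightarrow> real" where
  "cnorm n v = sqrt (\<Sum>k<n. (cmod (v k))\<^sup>2)"

primrec gs_list :: "nat \<Rightarrow> (nat \<Rightarrow> nat \<Rightarrow> complex) \<Rightarrow> nat \<Rightarrow> (nat \<Rightarrow> complex) list" where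
  "gs_list n c 0 = []"
| "gs_list n c (Suc k) =
     (let us = gs_list n c k;
          w = (\<lambda>a. c k a - (\<Sum>j<length us. cinner n (us ! j) (c k) * (us ! j) a))
      in us @ [(\<lambda>a. w a / complex_of_real (cnorm n w))])"

definition gram_schmidt :: "nat \<Rightarrow> nat \<Rightarrow> (nat \<Rightarrow> nat \<Rightarrow> complex) \<Rightarrow> nat \<Rightarrow> nat \<Rightarrow> complex" where
  "gram_schmidt n r c = (\<lambda>i. gs_list n c r ! i)"

definition scaled_cols :: "nat \<Rightarrow> (nat \<Rightarrow> nat \<Rightarrow> complex) \<Rightarrow> nat \<Rightarrow> nat \<Rightarrow> complex" where
  "scaled_cols n c = (\<lambda>i a. c i a / complex_of_real (sqrt (real n)))"

definition perturb :: "nat \<Rightarrow> (nat \<Rightarrow> nat \<Rightarrow> real) \<Rightarrow> (nat \<Rightarrow> real) \<Rightarrow> (nat \<Rightarrow> nat \<Rightarrow> complex)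
    \<Rightarrow> nat \<Rightarrow> nat \<Rightarrow> complex" where
  "perturb r X \<theta> u = (\<lambda>a b. complex_of_real (X a b) + (\<Sum>i<r. complex_of_real (\<theta> i) * u i a * cnj (u i b)))"

definition cols_R :: "(nat \<times> nat \<Rightarrow> real) \<Rightarrow> nat \<Rightarrow> nat \<Rightarrow> complex" where
  "cols_R g = (\<lambda>j a. complex_of_real (g (a, j)))"

definition cols_C :: "(nat \<times> nat \<Rightarrow> complex) \<Rightarrow> nat \<Rightarrow> nat \<Rightarrow> complex" where
  "cols_C g = (\<lambda>j a. g (a, j))"

definition leb_R :: "nat \<Rightarrow> nat \<Rightarrow> (nat \<times> nat \<Rightarrow> real) measure" where
  "leb_R n r = completion (PiM ({..<n} \<times> {..<r}) (\<lambda>_. lborel))"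

definition leb_C :: "nat \<Rightarrow> nat \<Rightarrow> (nat \<times> nat \<Rightarrow> complex) measure" where
  "leb_C n r = completion (PiM ({..<n} \<times> {..<r}) (\<lambda>_. lborel))"

definition shares_eigenvalue :: "nat \<Rightarrow> (nat \<Rightarrow> nat \<Rightarrow> complex) \<Rightarrow> (nat \<Rightarrow> nat \<Rightarrow> real) \<Rightarrow> bool" where
  "shares_eigenvalue n A X \<longleftrightarrow>
     (\<exists>\<mu>. is_eigenvalue n A \<mu> \<and> is_eigenvalue n (\<lambda>a b. complex_of_real (X a b)) \<mu>)"

end

theory Submission
  imports Defs "Jordan_Normal_Form.Determinant"
begin

inductive polyf :: "'v set \<Rightarrow> (('v \<Rightarrow> 'b::euclidean_space) \<Rightarrow> real) \<Rightarrow> bool" for V where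
  pconst: "polyf V (\<lambda>x. c)"
| pvar: "v \<in> V \<Longrightarrow> b \<in> Basis \<Longrightarrow> polyf V (\<lambda>x. x v \<bullet> b)"
| padd: "polyf V f \<Longrightarrow> polyf V g \<Longrightarrow> polyf V (\<lambda>x. f x + g x)"
| pmult: "polyf V f \<Longrightarrow> polyf V g \<Longrightarrow> polyf V (\<lambda>x. f x * g x)"

lemma polyf_fix: "polyf V f \<Longrightarrow> polyf (V - {v}) (\<lambda>x. f (x(v:=y)))"
proof (induction rule: polyf.induct)
  case (pvar w b)
  then show ?case
    by (cases "w = v") (auto intro: polyf.intros)
qed (auto intro: polyf.intros)

lemma polyf_slice: "polyf V f \<Longrightarrow> polyf {()} (\<lambda>z. f (x(v := z ())))"
proof (induction rule: polyf.induct)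
  case (pvar w b)
  then show ?case
    by (cases "w = v") (auto intro: polyf.intros)
qed (auto intro: polyf.intros)

lemma polyf_meas_gen:
  "polyf V f \<Longrightarrow> (\<And>v. v \<in> V \<Longrightarrow> (\<lambda>y. h y v) \<in> borel_measurable M) \<Longrightarrow> (\<lambda>y. f (h y)) \<in> borel_measurable M"
  by (induction rule: polyf.induct) auto

lemma polyf_meas:
  assumes "polyf V f"
  shows "f \<in> borel_measurable (PiM V (\<lambda>_. lborel::'b::euclidean_space measure))"
proof -
  have "(\<lambda>y. f (id y)) \<in> borel_measurable (PiM V (\<lambda>_. lborel::'b measure))"
  proof (rule polyf_meas_gen[OF assms])
    fix v assume "v \<in> V"
    then have "(\<lambda>x. x v) \<in> measurable (PiM V (\<lambda>_. lborel::'b measure)) lborel"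
      by (rule measurable_component_singleton)
    then show "(\<lambda>y. id y v) \<in> borel_measurable (PiM V (\<lambda>_. lborel::'b measure))"
      by simp
  qed
  then show ?thesis by simp
qed

interpretation pslb: product_sigma_finite "\<lambda>_. lborel :: 'b::euclidean_space measure"
  by unfold_locales

lemma polyf_null_gen:
  fixes f :: "('v \<Rightarrow> 'b::euclidean_space) \<Rightarrow> real"
  assumes base: "\<And>g y0. polyf {()} g \<Longrightarrow> g (\<lambda>_. y0) \<noteq> 0 \<Longrightarrow> {y. g (\<lambda>_. y) = 0} \<in> null_sets (lborel::'b measure)"
  and fin: "finite V"
  shows "polyf V f \<Longrightarrow> x0 \<in> space (PiM V (\<lambda>_. lborel::'b measure)) \<Longrightarrow> f x0 \<noteq> 0 \<Longrightarrow>
     {x \<in> space (PiM V (\<lambda>_. lborel::'b measure)). f x = 0} \<in> null_sets (PiM V (\<lambda>_. lborel))"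
  using fin
proof (induction V arbitrary: f x0 rule: finite_induct)
  case empty
  then have "{x \<in> space (PiM {} (\<lambda>_. lborel::'b measure)). f x = 0} = {}"
    by (auto simp: space_PiM)
  then show ?case by (simp only:) simp
next
  case (insert v W)
  let ?M = "PiM (insert v W) (\<lambda>_. lborel::'b measure)"
  let ?N = "PiM W (\<lambda>_. lborel::'b measure)"
  let ?A = "{x \<in> space ?M. f x = 0}"
  have fm: "f \<in> borel_measurable ?M" by (rule polyf_meas[OF insert.prems(1)])
  have Asets: "?A \<in> sets ?M"
    using fm by measurable
  let ?f' = "\<lambda>x. f (x(v := x0 v))"
  have pf': "polyf W ?f'"
    using polyf_fix[OF insert.prems(1), of v "x0 v"] insert.hyps by (metis Diff_insert_absorb)
  have x0': "restrict x0 W \<in> space ?N"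
    using insert.prems(2) by (auto simp: space_PiM)
  have eqx0: "(restrict x0 W)(v := x0 v) = x0"
    using insert.prems(2) by (auto simp: space_PiM PiE_def extensional_def fun_eq_iff)
  have "?f' (restrict x0 W) \<noteq> 0" using eqx0 insert.prems(3) by simp
  then have Nnull: "{x \<in> space ?N. ?f' x = 0} \<in> null_sets ?N"
    using insert.IH[OF pf' x0'] by blast
  have "emeasure ?M ?A = (\<integral>\<^sup>+ x. indicator ?A x \<partial>?M)"
    using Asets by simp
  also have "\<dots> = (\<integral>\<^sup>+ x. \<integral>\<^sup>+ y. indicator ?A (x(v := y)) \<partial>lborel \<partial>?N)"
    using Asets insert.hyps
    by (intro pslb.product_nn_integral_insert) auto
  also have "\<dots> = (\<integral>\<^sup>+ x. 0 \<partial>?N)"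
  proof (rule nn_integral_cong_AE)
    have "AE x in ?N. x \<notin> {x \<in> space ?N. ?f' x = 0}"
      using Nnull by (rule AE_not_in)
    then show "AE x in ?N. (\<integral>\<^sup>+ y. indicator ?A (x(v := y)) \<partial>lborel) = 0"
    proof (rule AE_mp[OF _ AE_I2], intro impI)
      fix x assume xs: "x \<in> space ?N" and xn: "x \<notin> {x \<in> space ?N. ?f' x = 0}"
      then have "?f' x \<noteq> 0" by simp
      have ps: "polyf {()} (\<lambda>z. f (x(v := z ())))"
        by (rule polyf_slice[OF insert.prems(1)])
      have nul: "{y. f (x(v := y)) = 0} \<in> null_sets (lborel::'b measure)"
        using base[OF ps, of "x0 v"] \<open>?f' x \<noteq> 0\<close> by simp
      have eqi: "(\<lambda>y. indicator ?A (x(v := y))) = indicator {y. f (x(v := y)) = 0}"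
        using xs by (auto simp: space_PiM indicator_def PiE_def extensional_def)
      have "(\<integral>\<^sup>+ y. indicator ?A (x(v := y)) \<partial>lborel) = (\<integral>\<^sup>+ y. indicator {y. f (x(v := y)) = 0} y \<partial>lborel)"
        by (simp only: eqi)
      also have "\<dots> = emeasure lborel {y. f (x(v := y)) = 0}"
        using null_setsD2[OF nul] by (intro nn_integral_indicator) simp
      finally have "(\<integral>\<^sup>+ y. indicator ?A (x(v := y)) \<partial>lborel) = emeasure lborel {y. f (x(v := y)) = 0}" .
      then show "(\<integral>\<^sup>+ y. indicator ?A (x(v := y)) \<partial>lborel) = 0"
        using nul by (simp add: null_setsD1)
    qed
  qed
  also have "\<dots> = 0" by simp
  finally show ?case using Asets by (simp add: null_sets_def)
qed

lemma polyf_unit_real: "polyf V (g :: (unit \<Rightarrow> real) \<Rightarrow> real) \<Longrightarrow> \<exists>p. \<forall>y. g (\<lambda>_. y) = poly p y"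
proof (induction rule: polyf.induct)
  case (pconst c)
  then show ?case by (intro exI[of _ "[:c:]"]) simp
next
  case (pvar v b)
  then show ?case by (intro exI[of _ "[:0,1:]"]) simp
next
  case (padd f g)
  then obtain p q where "\<forall>y. f (\<lambda>_. y) = poly p y" "\<forall>y. g (\<lambda>_. y) = poly q y" by blast
  then show ?case by (intro exI[of _ "p + q"]) simp
next
  case (pmult f g)
  then obtain p q where "\<forall>y. f (\<lambda>_. y) = poly p y" "\<forall>y. g (\<lambda>_. y) = poly q y" by blast
  then show ?case by (intro exI[of _ "p * q"]) simp
qed

lemma base_real:
  assumes "polyf {()} (g :: (unit \<Rightarrow> real) \<Rightarrow> real)" "g (\<lambda>_. y0) \<noteq> 0"
  shows "{y. g (\<lambda>_. y) = 0} \<in> null_sets (lborel::real measure)"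
proof -
  obtain p where p: "\<forall>y. g (\<lambda>_. y) = poly p y" using polyf_unit_real[OF assms(1)] by blast
  then have "p \<noteq> 0" using assms(2) by auto
  then have "finite {y. poly p y = 0}" by (rule poly_roots_finite)
  then show ?thesis using p by (simp add: finite_imp_null_set_lborel)
qed

lemma polyf_null_real:
  fixes f :: "('v \<Rightarrow> real) \<Rightarrow> real"
  assumes "finite V" "polyf V f" "x0 \<in> space (PiM V (\<lambda>_. lborel::real measure))" "f x0 \<noteq> 0"
  shows "{x \<in> space (PiM V (\<lambda>_. lborel::real measure)). f x = 0} \<in> null_sets (PiM V (\<lambda>_. lborel))"
  by (rule polyf_null_gen[OF _ assms(1-4)]) (erule base_real, assumption)

lemma polyf_to_basis:
  "polyf V (g :: (unit \<Rightarrow> 'b::euclidean_space) \<Rightarrow> real) \<Longrightarrow>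
   polyf (Basis::'b set) (\<lambda>f::'b \<Rightarrow> real. g (\<lambda>_. \<Sum>b\<in>Basis. f b *\<^sub>R b))"
proof (induction rule: polyf.induct)
  case (pvar v b)
  have "polyf (Basis::'b set) (\<lambda>f::'b \<Rightarrow> real. f b \<bullet> 1)"
    using pvar by (intro polyf.pvar) auto
  moreover have "\<And>f::'b \<Rightarrow> real. (\<Sum>b\<in>Basis. f b *\<^sub>R b) \<bullet> b = f b \<bullet> 1"
    using pvar by (simp add: inner_sum_left inner_Basis if_distrib cong: if_cong)
  ultimately show ?case by simp
qed (auto intro: polyf.intros)

lemma base_euclid:
  assumes "polyf {()} (g :: (unit \<Rightarrow> 'b::euclidean_space) \<Rightarrow> real)" "g (\<lambda>_. y0) \<noteq> 0"
  shows "{y. g (\<lambda>_. y) = 0} \<in> null_sets (lborel::'b measure)"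
proof -
  let ?F = "\<lambda>f::'b \<Rightarrow> real. \<Sum>b\<in>Basis. f b *\<^sub>R b"
  let ?h = "\<lambda>f::'b \<Rightarrow> real. g (\<lambda>_. ?F f)"
  have ph: "polyf (Basis::'b set) ?h" by (rule polyf_to_basis[OF assms(1)])
  let ?x0 = "\<lambda>b. if b \<in> Basis then y0 \<bullet> b else undefined"
  have x0s: "?x0 \<in> space (PiM (Basis::'b set) (\<lambda>_. lborel::real measure))"
    by (auto simp: space_PiM)
  have "?F ?x0 = y0"
    by (simp add: euclidean_representation cong: sum.cong)
  then have "?h ?x0 \<noteq> 0" using assms(2) by simp
  then have nul: "{x \<in> space (PiM (Basis::'b set) (\<lambda>_. lborel::real measure)). ?h x = 0} \<in> null_sets (PiM Basis (\<lambda>_. lborel))"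
    using polyf_null_real[OF _ ph x0s] by simp
  have meas: "(\<lambda>y. g (\<lambda>_. y)) \<in> borel_measurable (borel::'b measure)"
    using polyf_meas_gen[OF assms(1), of "\<lambda>y _. y"] by simp
  have S: "{y. g (\<lambda>_. y) = 0} \<in> sets (borel::'b measure)"
    using meas by measurable
  have "{y. g (\<lambda>_. y) = 0} \<in> null_sets (distr (PiM (Basis::'b set) (\<lambda>_. lborel::real measure)) borel ?F)"
    using S nul by (subst null_sets_distr_iff) (auto simp: vimage_def Int_def conj_commute)
  then show ?thesis by (simp add: lborel_eq[symmetric])
qed


definition cpoly :: "'v set \<Rightarrow> (('v \<Rightarrow> 'b::euclidean_space) \<Rightarrow> complex) \<Rightarrow> bool" where
  "cpoly V F \<longleftrightarrow> polyf V (\<lambda>x. Re (F x)) \<and> polyf V (\<lambda>x. Im (F x))"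

lemma polyf_minus: "polyf V f \<Longrightarrow> polyf V g \<Longrightarrow> polyf V (\<lambda>x. f x - g x)"
proof -
  assume "polyf V f" "polyf V g"
  then have "polyf V (\<lambda>x. f x + (-1) * g x)" by (intro polyf.intros)
  then show ?thesis by simp
qed

lemma cpoly_const[intro]: "cpoly V (\<lambda>x. c)"
  by (simp add: cpoly_def polyf.pconst)

lemma cpoly_add[intro]: "cpoly V F \<Longrightarrow> cpoly V G \<Longrightarrow> cpoly V (\<lambda>x. F x + G x)"
  by (simp add: cpoly_def polyf.padd)

lemma cpoly_mult[intro]: "cpoly V F \<Longrightarrow> cpoly V G \<Longrightarrow> cpoly V (\<lambda>x. F x * G x)"
  by (simp add: cpoly_def polyf.padd polyf.pmult polyf_minus)

lemma cpoly_uminus[intro]: "cpoly V F \<Longrightarrow> cpoly V (\<lambda>x. - F x)"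
proof -
  assume "cpoly V F"
  then have "cpoly V (\<lambda>x. (-1) * F x)" by (intro cpoly_mult cpoly_const)
  then show ?thesis by simp
qed

lemma cpoly_diff[intro]: "cpoly V F \<Longrightarrow> cpoly V G \<Longrightarrow> cpoly V (\<lambda>x. F x - G x)"
  using cpoly_add[OF _ cpoly_uminus, of V F G] by simp

lemma cpoly_cnj[intro]: "cpoly V F \<Longrightarrow> cpoly V (\<lambda>x. cnj (F x))"
proof -
  assume "cpoly V F"
  then have "polyf V (\<lambda>x. (-1) * Im (F x))" by (intro polyf.intros) (auto simp: cpoly_def)
  then show ?thesis using \<open>cpoly V F\<close> by (simp add: cpoly_def)
qed

lemma cpoly_of_real[intro]: "polyf V f \<Longrightarrow> cpoly V (\<lambda>x. complex_of_real (f x))"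
  by (simp add: cpoly_def polyf.pconst)

lemma cpoly_sum[intro]: "(\<And>i. i \<in> I \<Longrightarrow> cpoly V (F i)) \<Longrightarrow> cpoly V (\<lambda>x. \<Sum>i\<in>I. F i x)"
proof (induction I rule: infinite_finite_induct)
  case (insert i I)
  then show ?case by (simp add: cpoly_add)
qed auto

lemma cpoly_prod[intro]: "(\<And>i. i \<in> I \<Longrightarrow> cpoly V (F i)) \<Longrightarrow> cpoly V (\<lambda>x. \<Prod>i\<in>I. F i x)"
proof (induction I rule: infinite_finite_induct)
  case (insert i I)
  then show ?case by (simp add: cpoly_mult)
qed auto

lemma cpoly_pow[intro]: "cpoly V F \<Longrightarrow> cpoly V (\<lambda>x. F x ^ k)"
  by (induction k) auto

lemma cpoly_det:
  assumes "\<And>a b. a < n \<Longrightarrow> b < n \<Longrightarrow> cpoly V (\<lambda>x. F x a b)"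
  shows "cpoly V (\<lambda>x. det (mat n n (\<lambda>(a,b). F x a b)))"
  unfolding det_def using assms by (auto intro!: cpoly_sum cpoly_prod cpoly_mult dest: permutes_in_image)

lemma eig_det:
  "is_eigenvalue n A \<mu> \<longleftrightarrow> det (mat n n (\<lambda>(a,b). A a b - (if a = b then \<mu> else 0))) = 0"
proof -
  let ?M = "mat n n (\<lambda>(a,b). A a b - (if a = b then \<mu> else 0))"
  have M: "?M \<in> carrier_mat n n" by simp
  have key: "\<And>w. (?M *\<^sub>v vec n w = 0\<^sub>v n) \<longleftrightarrow> (\<forall>a<n. (\<Sum>b<n. A a b * w b) = \<mu> * w a)"
  proof -
    fix w :: "nat \<Rightarrow> 'a"
    have "\<And>a. a < n \<Longrightarrow> (?M *\<^sub>v vec n w) $ a = (\<Sum>b<n. A a b * w b) - \<mu> * w a"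
    proof -
      fix a assume a: "a < n"
      have "(?M *\<^sub>v vec n w) $ a = (\<Sum>b\<in>{0..<n}. (A a b - (if a = b then \<mu> else 0)) * w b)"
        using a by (simp add: scalar_prod_def)
      also have "\<dots> = (\<Sum>b<n. A a b * w b - (if a = b then \<mu> * w b else 0))"
        by (auto simp: atLeast0LessThan left_diff_distrib intro!: sum.cong)
      also have "\<dots> = (\<Sum>b<n. A a b * w b) - (\<Sum>b<n. (if a = b then \<mu> * w b else 0))"
        by (rule sum_subtractf)
      also have "\<dots> = (\<Sum>b<n. A a b * w b) - \<mu> * w a"
        using a by simp
      finally show "(?M *\<^sub>v vec n w) $ a = (\<Sum>b<n. A a b * w b) - \<mu> * w a" .
    qed
    then show "(?M *\<^sub>v vec n w = 0\<^sub>v n) \<longleftrightarrow> (\<forall>a<n. (\<Sum>b<n. A a b * w b) = \<mu> * w a)"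
      by (auto simp: vec_eq_iff)
  qed
  have "det ?M = 0 \<longleftrightarrow> (\<exists>v. v \<in> carrier_vec n \<and> v \<noteq> 0\<^sub>v n \<and> ?M *\<^sub>v v = 0\<^sub>v n)"
    by (rule det_0_iff_vec_prod_zero_field[OF M])
  also have "\<dots> \<longleftrightarrow> is_eigenvalue n A \<mu>"
  proof
    assume "\<exists>v. v \<in> carrier_vec n \<and> v \<noteq> 0\<^sub>v n \<and> ?M *\<^sub>v v = 0\<^sub>v n"
    then obtain v where v: "v \<in> carrier_vec n" "v \<noteq> 0\<^sub>v n" "?M *\<^sub>v v = 0\<^sub>v n" by blast
    define w where "w = (\<lambda>i. v $ i)"
    have vw: "v = vec n w" using v(1) by (auto simp: w_def vec_eq_iff)
    have "\<exists>a<n. w a \<noteq> 0" using v(2) vw by (auto simp: vec_eq_iff)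
    moreover have "\<forall>a<n. (\<Sum>b<n. A a b * w b) = \<mu> * w a" using v(3) key vw by blast
    ultimately show "is_eigenvalue n A \<mu>" unfolding is_eigenvalue_def by blast
  next
    assume "is_eigenvalue n A \<mu>"
    then obtain w where w: "\<exists>a<n. w a \<noteq> 0" "\<forall>a<n. (\<Sum>b<n. A a b * w b) = \<mu> * w a"
      unfolding is_eigenvalue_def by blast
    have "vec n w \<noteq> 0\<^sub>v n" using w(1) by (auto simp: vec_eq_iff)
    then show "\<exists>v. v \<in> carrier_vec n \<and> v \<noteq> 0\<^sub>v n \<and> ?M *\<^sub>v v = 0\<^sub>v n"
      using key w(2) by (intro exI[of _ "vec n w"]) auto
  qed
  finally show ?thesis by simp
qed


locale symx =
  fixes n :: nat and X :: "nat \<Rightarrow> nat \<Rightarrow> real" and lam :: "nat \<Rightarrow> real"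
  assumes sym: "\<forall>a<n. \<forall>b<n. X a b = X b a"
    and eig: "{\<mu>. is_eigenvalue n X \<mu>} = lam ` {..<n}"
    and dist: "inj_on lam {..<n}"
begin

lemma swap_X: "(\<Sum>a<n. f a * (\<Sum>b<n. complex_of_real (X a b) * g b)) =
   (\<Sum>b<n. g b * (\<Sum>a<n. complex_of_real (X b a) * f a))"
proof -
  have "(\<Sum>a<n. f a * (\<Sum>b<n. complex_of_real (X a b) * g b)) = (\<Sum>a<n. \<Sum>b<n. f a * complex_of_real (X a b) * g b)"
    by (simp add: sum_distrib_left mult.assoc)
  also have "\<dots> = (\<Sum>b<n. \<Sum>a<n. f a * complex_of_real (X a b) * g b)"
    by (rule sum.swap)
  also have "\<dots> = (\<Sum>b<n. g b * (\<Sum>a<n. complex_of_real (X b a) * f a))"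
  proof (rule sum.cong[OF refl])
    fix b assume b: "b \<in> {..<n}"
    show "(\<Sum>a<n. f a * complex_of_real (X a b) * g b) = g b * (\<Sum>a<n. complex_of_real (X b a) * f a)"
      unfolding sum_distrib_left
    proof (rule sum.cong[OF refl])
      fix a assume a: "a \<in> {..<n}"
      have "X b a = X a b" using sym a b by auto
      then show "f a * complex_of_real (X a b) * g b = g b * (complex_of_real (X b a) * f a)"
        by (simp add: algebra_simps)
    qed
  qed
  finally show ?thesis .
qed

lemma real_eig:
  assumes "is_eigenvalue n (\<lambda>a b. complex_of_real (X a b)) \<mu>"
  shows "\<exists>k<n. \<mu> = complex_of_real (lam k)"
proof -
  obtain v where v0: "\<exists>a<n. v a \<noteq> 0" and ev: "\<forall>a<n. (\<Sum>b<n. complex_of_real (X a b) * v b) = \<mu> * v a"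
    using assms unfolding is_eigenvalue_def by blast
  define S where "S = (\<Sum>a<n. cnj (v a) * (\<Sum>b<n. complex_of_real (X a b) * v b))"
  define N where "N = (\<Sum>a<n. cnj (v a) * v a)"
  have "S = (\<Sum>a<n. cnj (v a) * (\<mu> * v a))" unfolding S_def using ev by (intro sum.cong) auto
  also have "\<dots> = \<mu> * N" unfolding N_def sum_distrib_left by (intro sum.cong) (simp_all add: algebra_simps)
  finally have SN: "S = \<mu> * N" .
  have Nr: "N = complex_of_real (\<Sum>a<n. (cmod (v a))\<^sup>2)"
    unfolding N_def of_real_sum by (intro sum.cong) (simp_all add: complex_norm_square[symmetric] mult.commute)
  obtain a0 where a0: "a0 < n" "v a0 \<noteq> 0" using v0 by blast
  have "(\<Sum>a<n. (cmod (v a))\<^sup>2) > 0"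
  proof -
    have "(\<Sum>a<n. (cmod (v a))\<^sup>2) \<ge> (cmod (v a0))\<^sup>2"
      using a0 by (intro member_le_sum) auto
    moreover have "(cmod (v a0))\<^sup>2 > 0" using a0 by simp
    ultimately show ?thesis by linarith
  qed
  then have N0: "N \<noteq> 0" "Im N = 0" unfolding Nr by (simp_all del: of_real_sum of_real_power)
  have "cnj S = (\<Sum>a<n. v a * (\<Sum>b<n. complex_of_real (X a b) * cnj (v b)))"
    unfolding S_def by simp
  also have "\<dots> = (\<Sum>b<n. cnj (v b) * (\<Sum>a<n. complex_of_real (X b a) * v a))"
    by (rule swap_X)
  also have "\<dots> = S" unfolding S_def by simp
  finally have "Im (cnj S) = Im S" by simp
  then have "Im S = 0" by simp
  moreover have "Re N \<noteq> 0" using N0 by (auto simp: complex_eq_iff)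
  ultimately have muR: "Im \<mu> = 0" using SN N0 by simp
  have eR: "\<forall>a<n. (\<Sum>b<n. X a b * Re (v b)) = Re \<mu> * Re (v a)"
  proof (intro allI impI)
    fix a assume "a < n"
    then have "Re (\<Sum>b<n. complex_of_real (X a b) * v b) = Re (\<mu> * v a)" using ev by simp
    then show "(\<Sum>b<n. X a b * Re (v b)) = Re \<mu> * Re (v a)" using muR by (simp add: Re_sum)
  qed
  have eI: "\<forall>a<n. (\<Sum>b<n. X a b * Im (v b)) = Re \<mu> * Im (v a)"
  proof (intro allI impI)
    fix a assume "a < n"
    then have "Im (\<Sum>b<n. complex_of_real (X a b) * v b) = Im (\<mu> * v a)" using ev by simp
    then show "(\<Sum>b<n. X a b * Im (v b)) = Re \<mu> * Im (v a)" using muR by (simp add: Im_sum)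
  qed
  have "is_eigenvalue n X (Re \<mu>)"
  proof (cases "Re (v a0) = 0")
    case True
    then have "Im (v a0) \<noteq> 0" using a0(2) by (auto simp: complex_eq_iff)
    then show ?thesis unfolding is_eigenvalue_def using eI a0(1) by (intro exI[of _ "\<lambda>b. Im (v b)"]) blast
  next
    case False
    then show ?thesis unfolding is_eigenvalue_def using eR a0(1) by (intro exI[of _ "\<lambda>b. Re (v b)"]) blast
  qed
  then obtain k where "k < n" "Re \<mu> = lam k" using eig by auto
  then show ?thesis using muR by (intro exI[of _ k]) (auto simp: complex_eq_iff)
qed


lemma swap_Xr: "(\<Sum>a<n. f a * (\<Sum>b<n. X a b * g b)) = (\<Sum>b<n. g b * (\<Sum>a<n. X b a * f a))"
proof -
  have "(\<Sum>a<n. f a * (\<Sum>b<n. X a b * g b)) = (\<Sum>a<n. \<Sum>b<n. f a * X a b * g b)"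
    by (simp add: sum_distrib_left mult.assoc)
  also have "\<dots> = (\<Sum>b<n. \<Sum>a<n. f a * X a b * g b)"
    by (rule sum.swap)
  also have "\<dots> = (\<Sum>b<n. g b * (\<Sum>a<n. X b a * f a))"
  proof (rule sum.cong[OF refl])
    fix b assume b: "b \<in> {..<n}"
    show "(\<Sum>a<n. f a * X a b * g b) = g b * (\<Sum>a<n. X b a * f a)"
      unfolding sum_distrib_left
    proof (rule sum.cong[OF refl])
      fix a assume a: "a \<in> {..<n}"
      have "X b a = X a b" using sym a b by auto
      then show "f a * X a b * g b = g b * (X b a * f a)"
        by (simp add: algebra_simps)
    qed
  qed
  finally show ?thesis .
qed

lemma ebasis:
  "\<exists>E. (\<forall>k<n. \<forall>a<n. (\<Sum>b<n. X a b * E k b) = lam k * E k a) \<and>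
       (\<forall>k<n. \<forall>k'<n. (\<Sum>a<n. E k a * E k' a) = (if k = k' then 1 else 0))"
proof -
  have "\<forall>k<n. \<exists>v. (\<exists>a<n. v a \<noteq> 0) \<and> (\<forall>a<n. (\<Sum>b<n. X a b * v b) = lam k * v a)"
    using eig unfolding is_eigenvalue_def by blast
  then obtain e where e0: "\<And>k. k < n \<Longrightarrow> \<exists>a<n. e k a \<noteq> 0"
    and ee: "\<And>k. k < n \<Longrightarrow> \<forall>a<n. (\<Sum>b<n. X a b * e k b) = lam k * e k a"
    by metis
  define nu where "nu k = sqrt (\<Sum>a<n. e k a * e k a)" for k
  have nupos: "nu k > 0" if kn: "k < n" for k
  proof -
    obtain a0 where "a0 < n" "e k a0 \<noteq> 0" using e0[OF kn] by blast
    then have "(\<Sum>a<n. e k a * e k a) \<ge> e k a0 * e k a0" by (intro member_le_sum) auto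
    moreover have "e k a0 * e k a0 > 0" using \<open>e k a0 \<noteq> 0\<close> by (metis not_real_square_gt_zero)
    ultimately show ?thesis unfolding nu_def by simp
  qed
  define E where "E k a = e k a / nu k" for k a
  have orth: "(\<Sum>a<n. e k a * e k' a) = 0" if "k < n" "k' < n" "k \<noteq> k'" for k k'
  proof -
    have "lam k * (\<Sum>a<n. e k a * e k' a) = (\<Sum>a<n. e k' a * (\<Sum>b<n. X a b * e k b))"
      using ee[OF that(1)] by (simp add: sum_distrib_left algebra_simps)
    also have "\<dots> = (\<Sum>b<n. e k b * (\<Sum>a<n. X b a * e k' a))" by (rule swap_Xr)
    also have "\<dots> = lam k' * (\<Sum>a<n. e k a * e k' a)"
      using ee[OF that(2)] by (simp add: sum_distrib_left algebra_simps)
    finally have "(lam k - lam k') * (\<Sum>a<n. e k a * e k' a) = 0" by (simp add: algebra_simps)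
    moreover have "lam k \<noteq> lam k'" using dist that by (auto dest: inj_onD)
    ultimately show ?thesis by simp
  qed
  have "\<forall>k<n. \<forall>a<n. (\<Sum>b<n. X a b * E k b) = lam k * E k a"
    using ee unfolding E_def by (simp add: sum_divide_distrib[symmetric] )
  moreover have "\<forall>k<n. \<forall>k'<n. (\<Sum>a<n. E k a * E k' a) = (if k = k' then 1 else 0)"
  proof (intro allI impI)
    fix k k' assume kk: "k < n" "k' < n"
    have "(\<Sum>a<n. E k a * E k' a) = (\<Sum>a<n. e k a * e k' a) / (nu k * nu k')"
      unfolding E_def by (simp add: sum_divide_distrib)
    also have "\<dots> = (if k = k' then 1 else 0)"
    proof (cases "k = k'")
      case True
      have "(nu k)\<^sup>2 = (\<Sum>a<n. e k a * e k a)" unfolding nu_def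
        by (simp add: sum_nonneg)
      then have "nu k * nu k = (\<Sum>a<n. e k a * e k a)" by (simp add: power2_eq_square)
      moreover have "nu k * nu k > 0" using nupos[OF kk(1)] by simp
      ultimately show ?thesis using True by (metis divide_self less_irrefl)
    next
      case False
      then show ?thesis using orth kk by simp
    qed
    finally show "(\<Sum>a<n. E k a * E k' a) = (if k = k' then 1 else 0)" .
  qed
  ultimately show ?thesis by blast
qed

end

lemma onb_complete:
  fixes E :: "nat \<Rightarrow> nat \<Rightarrow> real" and v :: "nat \<Rightarrow> complex"
  assumes on: "\<forall>k<n. \<forall>k'<n. (\<Sum>a<n. E k a * E k' a) = (if k = k' then 1 else 0)"
    and z: "\<forall>k<n. (\<Sum>a<n. complex_of_real (E k a) * v a) = 0"
    and a: "a < n"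
  shows "v a = 0"
proof -
  let ?E = "mat n n (\<lambda>(k,a). complex_of_real (E k a))"
  have c: "?E \<in> carrier_mat n n" "transpose_mat ?E \<in> carrier_mat n n" by auto
  have "?E * transpose_mat ?E = 1\<^sub>m n"
  proof (rule eq_matI)
    fix i j assume ij: "i < dim_row (1\<^sub>m n)" "j < dim_col (1\<^sub>m n)"
    then have "(?E * transpose_mat ?E) $$ (i, j) = (\<Sum>a\<in>{0..<n}. complex_of_real (E i a) * complex_of_real (E j a))"
      by (simp add: scalar_prod_def)
    also have "\<dots> = complex_of_real (\<Sum>a<n. E i a * E j a)" by (simp add: atLeast0LessThan)
    also have "\<dots> = 1\<^sub>m n $$ (i, j)" using on ij by simp
    finally show "(?E * transpose_mat ?E) $$ (i, j) = 1\<^sub>m n $$ (i, j)" .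
  qed auto
  then have TE: "transpose_mat ?E * ?E = 1\<^sub>m n" by (rule mat_mult_left_right_inverse[OF c])
  have "v a = (\<Sum>a'<n. (if a = a' then v a' else 0))" using a by simp
  also have "\<dots> = (\<Sum>a'<n. (if a = a' then 1 else 0) * v a')" by (intro sum.cong) auto
  also have "\<dots> = (\<Sum>a'<n. (transpose_mat ?E * ?E) $$ (a, a') * v a')"
    using a by (intro sum.cong) (auto simp: TE)
  also have "\<dots> = (\<Sum>a'<n. (\<Sum>k<n. complex_of_real (E k a) * complex_of_real (E k a')) * v a')"
    using a by (intro sum.cong) (auto simp: scalar_prod_def atLeast0LessThan)
  also have "\<dots> = (\<Sum>k<n. complex_of_real (E k a) * (\<Sum>a'<n. complex_of_real (E k a') * v a'))"
  proof -
    have "(\<Sum>a'<n. (\<Sum>k<n. complex_of_real (E k a) * complex_of_real (E k a')) * v a')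
       = (\<Sum>a'<n. \<Sum>k<n. complex_of_real (E k a) * (complex_of_real (E k a') * v a'))"
      by (simp add: sum_distrib_right mult.assoc)
    also have "\<dots> = (\<Sum>k<n. \<Sum>a'<n. complex_of_real (E k a) * (complex_of_real (E k a') * v a'))"
      by (rule sum.swap)
    also have "\<dots> = (\<Sum>k<n. complex_of_real (E k a) * (\<Sum>a'<n. complex_of_real (E k a') * v a'))"
      by (simp add: sum_distrib_left)
    finally show ?thesis .
  qed
  also have "\<dots> = 0" using z by simp
  finally show ?thesis .
qed


lemma swapX_gen:
  assumes sym: "\<forall>a<n. \<forall>b<n. X a b = X b a"
  shows "(\<Sum>a<n. f a * (\<Sum>b<n. complex_of_real (X a b) * g b)) =
   (\<Sum>b<n. g b * (\<Sum>a<n. complex_of_real (X b a) * f a))"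
proof -
  have "(\<Sum>a<n. f a * (\<Sum>b<n. complex_of_real (X a b) * g b)) = (\<Sum>a<n. \<Sum>b<n. f a * complex_of_real (X a b) * g b)"
    by (simp add: sum_distrib_left mult.assoc)
  also have "\<dots> = (\<Sum>b<n. \<Sum>a<n. f a * complex_of_real (X a b) * g b)"
    by (rule sum.swap)
  also have "\<dots> = (\<Sum>b<n. g b * (\<Sum>a<n. complex_of_real (X b a) * f a))"
  proof (rule sum.cong[OF refl])
    fix b assume b: "b \<in> {..<n}"
    show "(\<Sum>a<n. f a * complex_of_real (X a b) * g b) = g b * (\<Sum>a<n. complex_of_real (X b a) * f a)"
      unfolding sum_distrib_left
    proof (rule sum.cong[OF refl])
      fix a assume a: "a \<in> {..<n}"
      have "X b a = X a b" using sym a b by auto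
      then show "f a * complex_of_real (X a b) * g b = g b * (complex_of_real (X b a) * f a)"
        by (simp add: algebra_simps)
    qed
  qed
  finally show ?thesis .
qed

lemma key_noneig:
  fixes E :: "nat \<Rightarrow> nat \<Rightarrow> real" and \<kappa> :: "nat \<Rightarrow> nat"
  assumes sym: "\<forall>a<n. \<forall>b<n. X a b = X b a"
    and Eeig: "\<forall>k<n. \<forall>a<n. (\<Sum>b<n. X a b * E k b) = lam k * E k a"
    and Eon: "\<forall>k<n. \<forall>k'<n. (\<Sum>a<n. E k a * E k' a) = (if k = k' then 1 else 0)"
    and dist: "inj_on lam {..<n}"
    and kr: "\<forall>i<r. \<kappa> i < n" and kinj: "inj_on \<kappa> {..<r}"
    and j: "j < n"
    and cj: "\<exists>i<r. \<kappa> i = j \<and> \<theta> i \<noteq> 0"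
    and ck: "\<forall>i<r. \<kappa> i \<noteq> j \<longrightarrow> lam (\<kappa> i) + \<theta> i \<noteq> lam j"
  shows "\<not> is_eigenvalue n (perturb r X \<theta> (\<lambda>i a. complex_of_real (E (\<kappa> i) a))) (complex_of_real (lam j))"
proof
  assume "is_eigenvalue n (perturb r X \<theta> (\<lambda>i a. complex_of_real (E (\<kappa> i) a))) (complex_of_real (lam j))"
  then obtain v where v0: "\<exists>a<n. v a \<noteq> 0"
    and ev: "\<forall>a<n. (\<Sum>b<n. perturb r X \<theta> (\<lambda>i a. complex_of_real (E (\<kappa> i) a)) a b * v b) = complex_of_real (lam j) * v a"
    unfolding is_eigenvalue_def by blast
  define c where "c k = (\<Sum>a<n. complex_of_real (E k a) * v a)" for k
  have Pv: "(\<Sum>b<n. perturb r X \<theta> (\<lambda>i a. complex_of_real (E (\<kappa> i) a)) a b * v b)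
     = (\<Sum>b<n. complex_of_real (X a b) * v b) + (\<Sum>i<r. complex_of_real (\<theta> i) * complex_of_real (E (\<kappa> i) a) * c (\<kappa> i))" for a
  proof -
    have "(\<Sum>b<n. perturb r X \<theta> (\<lambda>i a. complex_of_real (E (\<kappa> i) a)) a b * v b)
       = (\<Sum>b<n. complex_of_real (X a b) * v b) + (\<Sum>b<n. \<Sum>i<r. complex_of_real (\<theta> i) * complex_of_real (E (\<kappa> i) a) * (complex_of_real (E (\<kappa> i) b) * v b))"
      unfolding perturb_def by (simp add: algebra_simps sum.distrib sum_distrib_right sum_distrib_left)
    also have "(\<Sum>b<n. \<Sum>i<r. complex_of_real (\<theta> i) * complex_of_real (E (\<kappa> i) a) * (complex_of_real (E (\<kappa> i) b) * v b))
       = (\<Sum>i<r. \<Sum>b<n. complex_of_real (\<theta> i) * complex_of_real (E (\<kappa> i) a) * (complex_of_real (E (\<kappa> i) b) * v b))"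
      by (rule sum.swap)
    also have "\<dots> = (\<Sum>i<r. complex_of_real (\<theta> i) * complex_of_real (E (\<kappa> i) a) * c (\<kappa> i))"
      unfolding c_def by (simp add: sum_distrib_left)
    finally show ?thesis .
  qed
  have ceq: "complex_of_real (lam k) * c k + (\<Sum>i<r. complex_of_real (\<theta> i) * (if \<kappa> i = k then c k else 0))
        = complex_of_real (lam j) * c k" if k: "k < n" for k
  proof -
    have "complex_of_real (lam j) * c k = (\<Sum>a<n. complex_of_real (E k a) * (complex_of_real (lam j) * v a))"
      unfolding c_def by (simp add: sum_distrib_left algebra_simps)
    also have "\<dots> = (\<Sum>a<n. complex_of_real (E k a) * ((\<Sum>b<n. complex_of_real (X a b) * v b) + (\<Sum>i<r. complex_of_real (\<theta> i) * complex_of_real (E (\<kappa> i) a) * c (\<kappa> i))))"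
      using ev Pv by (intro sum.cong) auto
    also have "\<dots> = (\<Sum>a<n. complex_of_real (E k a) * (\<Sum>b<n. complex_of_real (X a b) * v b))
       + (\<Sum>a<n. \<Sum>i<r. complex_of_real (\<theta> i) * c (\<kappa> i) * (complex_of_real (E k a) * complex_of_real (E (\<kappa> i) a)))"
      by (simp add: algebra_simps sum.distrib sum_distrib_left)
    also have "(\<Sum>a<n. complex_of_real (E k a) * (\<Sum>b<n. complex_of_real (X a b) * v b))
       = (\<Sum>b<n. v b * (\<Sum>a<n. complex_of_real (X b a) * complex_of_real (E k a)))"
      by (rule swapX_gen[OF sym])
    also have "\<dots> = (\<Sum>b<n. v b * (complex_of_real (lam k) * complex_of_real (E k b)))"
    proof (intro sum.cong refl)
      fix b assume "b \<in> {..<n}"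
      then have "(\<Sum>a<n. X b a * E k a) = lam k * E k b" using Eeig k by auto
      then have "complex_of_real (\<Sum>a<n. X b a * E k a) = complex_of_real (lam k * E k b)" by simp
      then show "v b * (\<Sum>a<n. complex_of_real (X b a) * complex_of_real (E k a)) = v b * (complex_of_real (lam k) * complex_of_real (E k b))"
        by simp
    qed
    also have "\<dots> = complex_of_real (lam k) * c k"
      unfolding c_def by (simp add: sum_distrib_left algebra_simps)
    also have "(\<Sum>a<n. \<Sum>i<r. complex_of_real (\<theta> i) * c (\<kappa> i) * (complex_of_real (E k a) * complex_of_real (E (\<kappa> i) a)))
       = (\<Sum>i<r. \<Sum>a<n. complex_of_real (\<theta> i) * c (\<kappa> i) * (complex_of_real (E k a) * complex_of_real (E (\<kappa> i) a)))"
      by (rule sum.swap)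
    also have "\<dots> = (\<Sum>i<r. complex_of_real (\<theta> i) * (if \<kappa> i = k then c k else 0))"
    proof (intro sum.cong refl)
      fix i assume i: "i \<in> {..<r}"
      have "(\<Sum>a<n. complex_of_real (\<theta> i) * c (\<kappa> i) * (complex_of_real (E k a) * complex_of_real (E (\<kappa> i) a)))
         = complex_of_real (\<theta> i) * c (\<kappa> i) * complex_of_real (\<Sum>a<n. E k a * E (\<kappa> i) a)"
        by (simp add: sum_distrib_left)
      also have "\<dots> = complex_of_real (\<theta> i) * (if \<kappa> i = k then c k else 0)"
        using Eon k kr i by auto
      finally show "(\<Sum>a<n. complex_of_real (\<theta> i) * c (\<kappa> i) * (complex_of_real (E k a) * complex_of_real (E (\<kappa> i) a)))
         = complex_of_real (\<theta> i) * (if \<kappa> i = k then c k else 0)" .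
    qed
    finally show ?thesis by simp
  qed
  have c0: "c k = 0" if k: "k < n" for k
  proof (cases "\<exists>i<r. \<kappa> i = k")
    case True
    then obtain i0 where i0: "i0 < r" "\<kappa> i0 = k" by blast
    have "(\<Sum>i<r. complex_of_real (\<theta> i) * (if \<kappa> i = k then c k else 0)) = (\<Sum>i<r. if i = i0 then complex_of_real (\<theta> i) * c k else 0)"
      using i0 kinj by (intro sum.cong refl) (auto dest: inj_onD)
    also have "\<dots> = complex_of_real (\<theta> i0) * c k" using i0 by simp
    finally have "complex_of_real (lam k + \<theta> i0 - lam j) * c k = 0"
      using ceq[OF k] by (simp add: algebra_simps)
    moreover have "lam k + \<theta> i0 - lam j \<noteq> 0"
    proof (cases "k = j")
      case True
      then obtain i1 where "i1 < r" "\<kappa> i1 = j" "\<theta> i1 \<noteq> 0" using cj by blast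
      then have "i1 = i0" using i0 True kinj by (auto dest: inj_onD)
      then show ?thesis using True \<open>\<theta> i1 \<noteq> 0\<close> by simp
    next
      case False
      then show ?thesis using ck i0 by auto
    qed
    ultimately show ?thesis by (metis mult_eq_0_iff of_real_eq_0_iff)
  next
    case False
    then have "(\<Sum>i<r. complex_of_real (\<theta> i) * (if \<kappa> i = k then c k else 0)) = 0" by (intro sum.neutral) auto
    then have "complex_of_real (lam k - lam j) * c k = 0"
      using ceq[OF k] by (simp add: algebra_simps)
    moreover have "k \<noteq> j" using False cj by auto
    then have "lam k - lam j \<noteq> 0" using dist k j by (auto dest: inj_onD)
    ultimately show ?thesis by (metis mult_eq_0_iff of_real_eq_0_iff)
  qed
  have "v a = 0" if "a < n" for a
    using onb_complete[OF Eon _ that, of v] c0 unfolding c_def by auto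
  then show False using v0 by auto
qed


lemma choose_kappa:
  fixes lam \<theta> :: "nat \<Rightarrow> real" and idx :: "nat \<Rightarrow> nat"
  assumes "1 \<le> r" and "r < n"
    and dist: "inj_on lam {..<n}"
    and theta: "\<forall>i<r. \<theta> i \<noteq> 0"
    and idx_range: "\<forall>k<r - 1. idx k < n"
    and idx_inj: "inj_on idx {..<r - 1}"
    and H: "(\<lambda>k. lam (idx k) + \<theta> k) ` {..<r - 1} \<inter> lam ` {..<n} = {}"
    and j: "j < n"
  shows "\<exists>\<kappa>. (\<forall>i<r. \<kappa> i < n) \<and> inj_on \<kappa> {..<r} \<and> (\<exists>i<r. \<kappa> i = j \<and> \<theta> i \<noteq> 0)
     \<and> (\<forall>i<r. \<kappa> i \<noteq> j \<longrightarrow> lam (\<kappa> i) + \<theta> i \<noteq> lam j)"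
proof -
  define m where "m = r - 1"
  have rm: "r = Suc m" using assms(1) unfolding m_def by simp
  have Hi: "lam (idx i) + \<theta> i \<noteq> lam j" if "i < m" for i
    using H that j unfolding m_def by blast
  show ?thesis
  proof (cases "j \<in> idx ` {..<m}")
    case False
    define \<kappa> where "\<kappa> i = (if i < m then idx i else j)" for i
    have "inj_on \<kappa> {..<r}"
      unfolding inj_on_def \<kappa>_def rm using False idx_inj unfolding m_def
      by (auto dest: inj_onD)
    moreover have "\<forall>i<r. \<kappa> i < n" using idx_range j unfolding \<kappa>_def m_def by auto
    moreover have "\<exists>i<r. \<kappa> i = j \<and> \<theta> i \<noteq> 0"
      using theta rm by (intro exI[of _ m]) (auto simp: \<kappa>_def)
    moreover have "\<forall>i<r. \<kappa> i \<noteq> j \<longrightarrow> lam (\<kappa> i) + \<theta> i \<noteq> lam j"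
      using Hi unfolding \<kappa>_def by auto
    ultimately show ?thesis by blast
  next
    case True
    then obtain m0 where m0: "m0 < m" "idx m0 = j" by blast
    define S where "S = {..<n} - idx ` {..<m}"
    have sub: "idx ` {..<m} \<subseteq> {..<n}" using idx_range unfolding m_def by auto
    have "card S = n - m"
      unfolding S_def using sub idx_inj unfolding m_def
      by (simp add: card_Diff_subset card_image)
    then have cS: "card S \<ge> 2" using assms(2) rm by simp
    have fS: "finite S" unfolding S_def by simp
    obtain k1 where k1: "k1 \<in> S" using cS by (metis all_not_in_conv card.empty not_numeral_le_zero)
    have "card (S - {k1}) \<ge> 1" using cS k1 fS by (simp add: card_Diff_singleton)
    then obtain k2 where k2: "k2 \<in> S" "k2 \<noteq> k1"
      by (metis Diff_iff card.empty all_not_in_conv not_one_le_zero singletonI)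
    have "\<exists>k\<in>S. lam k + \<theta> m \<noteq> lam j"
    proof (rule ccontr)
      assume "\<not> ?thesis"
      then have "lam k1 + \<theta> m = lam j" "lam k2 + \<theta> m = lam j" using k1 k2 by auto
      then have "lam k1 = lam k2" by simp
      then show False using dist k1 k2 unfolding S_def by (auto dest: inj_onD)
    qed
    then obtain k where k: "k \<in> S" "lam k + \<theta> m \<noteq> lam j" by blast
    define \<kappa> where "\<kappa> i = (if i < m then idx i else k)" for i
    have "inj_on \<kappa> {..<r}"
      unfolding inj_on_def \<kappa>_def rm using k(1) idx_inj unfolding m_def S_def
      by (auto dest: inj_onD)
    moreover have "\<forall>i<r. \<kappa> i < n" using idx_range k(1) unfolding \<kappa>_def m_def S_def by auto
    moreover have "\<exists>i<r. \<kappa> i = j \<and> \<theta> i \<noteq> 0"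
      using theta rm m0 by (intro exI[of _ m0]) (auto simp: \<kappa>_def)
    moreover have "\<forall>i<r. \<kappa> i \<noteq> j \<longrightarrow> lam (\<kappa> i) + \<theta> i \<noteq> lam j"
      using Hi k rm unfolding \<kappa>_def by (auto simp: less_Suc_eq)
    ultimately show ?thesis by blast
  qed
qed


definition qq :: "nat \<Rightarrow> (nat \<Rightarrow> complex) \<Rightarrow> complex" where
  "qq n p = cinner n p p"

primrec plist :: "nat \<Rightarrow> (nat \<Rightarrow> nat \<Rightarrow> complex) \<Rightarrow> nat \<Rightarrow> (nat \<Rightarrow> complex) list" where
  "plist n c 0 = []"
| "plist n c (Suc k) = (let ps = plist n c k in ps @ [\<lambda>a. (\<Prod>j<k. qq n (ps ! j)) * c k a
      - (\<Sum>j<k. cinner n (ps ! j) (c k) * (\<Prod>i\<in>{..<k} - {j}. qq n (ps ! i)) * (ps ! j) a)])"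

definition pp :: "nat \<Rightarrow> (nat \<Rightarrow> nat \<Rightarrow> complex) \<Rightarrow> nat \<Rightarrow> nat \<Rightarrow> complex" where
  "pp n c j = plist n c (Suc j) ! j"

definition gs :: "nat \<Rightarrow> (nat \<Rightarrow> nat \<Rightarrow> complex) \<Rightarrow> nat \<Rightarrow> nat \<Rightarrow> complex" where
  "gs n c j = gs_list n c (Suc j) ! j"

lemma length_plist[simp]: "length (plist n c k) = k"
  by (induction k) (simp_all add: Let_def)

lemma length_gs_list[simp]: "length (gs_list n c k) = k"
  by (induction k) (simp_all add: Let_def)

lemma plist_nth: "j < k \<Longrightarrow> plist n c k ! j = pp n c j"
proof (induction k)
  case (Suc k)
  then show ?case
    by (cases "j = k") (auto simp: pp_def Let_def nth_append)
qed simp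

lemma gs_list_nth: "j < k \<Longrightarrow> gs_list n c k ! j = gs n c j"
proof (induction k)
  case (Suc k)
  then show ?case
    by (cases "j = k") (auto simp: gs_def Let_def nth_append)
qed simp

lemma pp_rec: "pp n c k = (\<lambda>a. (\<Prod>j<k. qq n (pp n c j)) * c k a
      - (\<Sum>j<k. cinner n (pp n c j) (c k) * (\<Prod>i\<in>{..<k} - {j}. qq n (pp n c i)) * pp n c j a))"
proof -
  have "pp n c k = plist n c (Suc k) ! k" by (simp add: pp_def)
  also have "\<dots> = (\<lambda>a. (\<Prod>j<k. qq n (plist n c k ! j)) * c k a
      - (\<Sum>j<k. cinner n (plist n c k ! j) (c k) * (\<Prod>i\<in>{..<k} - {j}. qq n (plist n c k ! i)) * (plist n c k ! j) a))"
    by (simp add: Let_def nth_append)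
  also have "\<dots> = (\<lambda>a. (\<Prod>j<k. qq n (pp n c j)) * c k a
      - (\<Sum>j<k. cinner n (pp n c j) (c k) * (\<Prod>i\<in>{..<k} - {j}. qq n (pp n c i)) * pp n c j a))"
    by (intro ext arg_cong2[where f="(-)"] arg_cong2[where f="(*)"] sum.cong prod.cong refl)
       (auto simp: plist_nth)
  finally show ?thesis .
qed

lemma gs_rec: "gs n c k = (let w = (\<lambda>a. c k a - (\<Sum>j<k. cinner n (gs n c j) (c k) * gs n c j a))
      in (\<lambda>a. w a / complex_of_real (cnorm n w)))"
proof -
  have "gs n c k = gs_list n c (Suc k) ! k" by (simp add: gs_def)
  also have "\<dots> = (let w = (\<lambda>a. c k a - (\<Sum>j<k. cinner n (gs_list n c k ! j) (c k) * (gs_list n c k ! j) a))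
      in (\<lambda>a. w a / complex_of_real (cnorm n w)))"
    by (simp add: Let_def nth_append)
  also have "(\<lambda>a. c k a - (\<Sum>j<k. cinner n (gs_list n c k ! j) (c k) * (gs_list n c k ! j) a))
     = (\<lambda>a. c k a - (\<Sum>j<k. cinner n (gs n c j) (c k) * gs n c j a))"
    by (intro ext arg_cong2[where f="(-)"] sum.cong refl) (auto simp: gs_list_nth)
  finally show ?thesis .
qed

lemma qq_cnorm: "qq n p = complex_of_real ((cnorm n p)\<^sup>2)"
proof -
  have "qq n p = (\<Sum>k<n. complex_of_real ((cmod (p k))\<^sup>2))"
    unfolding qq_def cinner_def by (intro sum.cong refl) (metis complex_norm_square mult.commute)
  also have "\<dots> = complex_of_real ((cnorm n p)\<^sup>2)"
    unfolding cnorm_def by (simp add: sum_nonneg)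
  finally show ?thesis .
qed

lemma cnorm_scale: "cnorm n (\<lambda>a. z * w a) = cmod z * cnorm n w"
proof -
  have "(\<Sum>k<n. (cmod (z * w k))\<^sup>2) = (cmod z)\<^sup>2 * (\<Sum>k<n. (cmod (w k))\<^sup>2)"
    by (simp add: norm_mult power_mult_distrib sum_distrib_left)
  then show ?thesis unfolding cnorm_def by (simp add: real_sqrt_mult)
qed

lemma cinner_scale_left: "cinner n (\<lambda>a. p a / complex_of_real t) c = cinner n p c / complex_of_real t"
  unfolding cinner_def by (simp add: sum_divide_distrib)

lemma gs_pp:
  assumes "\<forall>i\<le>j. cnorm n (pp n c i) \<noteq> 0"
  shows "gs n c j = (\<lambda>a. pp n c j a / complex_of_real (cnorm n (pp n c j)))"
  using assms
proof (induction j rule: less_induct)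
  case (less j)
  define N where "N i = cnorm n (pp n c i)" for i
  define w where "w = (\<lambda>a. c j a - (\<Sum>i<j. cinner n (gs n c i) (c j) * gs n c i a))"
  define Q where "Q = (\<Prod>i<j. N i ^ 2)"
  have Npos: "N i \<noteq> 0" if "i \<le> j" for i using less.prems that unfolding N_def by auto
  have Qpos: "Q > 0" unfolding Q_def using Npos by (intro prod_pos) auto
  have gsi: "gs n c i = (\<lambda>a. pp n c i a / complex_of_real (N i))" if "i < j" for i
    using less.IH[OF that] less.prems that unfolding N_def by auto
  have w2: "w = (\<lambda>a. c j a - (\<Sum>i<j. cinner n (pp n c i) (c j) * pp n c i a / complex_of_real (N i ^ 2)))"
    unfolding w_def
    by (intro ext arg_cong2[where f="(-)"] sum.cong refl)
       (simp add: gsi cinner_scale_left power2_eq_square)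
  have pq: "qq n (pp n c i) = complex_of_real (N i ^ 2)" for i unfolding N_def by (rule qq_cnorm)
  have prodrem: "(\<Prod>l\<in>{..<j} - {i}. (complex_of_real (N l))\<^sup>2) = (\<Prod>x<j. (complex_of_real (N x))\<^sup>2) / (complex_of_real (N i))\<^sup>2" if "i < j" for i
  proof -
    have "(\<Prod>x<j. (complex_of_real (N x))\<^sup>2) = (complex_of_real (N i))\<^sup>2 * (\<Prod>l\<in>{..<j} - {i}. (complex_of_real (N l))\<^sup>2)"
      using that by (subst prod.remove[of _ i]) auto
    then show ?thesis using Npos[of i] that by (simp add: field_simps)
  qed
  have ppw: "pp n c j = (\<lambda>a. complex_of_real Q * w a)"
  proof
    fix a
    have "pp n c j a = (\<Prod>i<j. qq n (pp n c i)) * c j a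
      - (\<Sum>i<j. cinner n (pp n c i) (c j) * (\<Prod>l\<in>{..<j} - {i}. qq n (pp n c l)) * pp n c i a)"
      by (subst pp_rec) simp
    also have "\<dots> = complex_of_real Q * c j a
        - (\<Sum>i<j. cinner n (pp n c i) (c j) * (complex_of_real Q / complex_of_real (N i ^ 2)) * pp n c i a)"
      by (intro arg_cong2[where f="(-)"] arg_cong2[where f="(*)"] sum.cong refl) (simp_all add: prodrem pq Q_def)
    also have "\<dots> = complex_of_real Q * w a"
      unfolding w2 by (simp add: right_diff_distrib sum_distrib_left algebra_simps)
    finally show "pp n c j a = complex_of_real Q * w a" .
  qed
  have "cnorm n (pp n c j) = Q * cnorm n w" unfolding ppw cnorm_scale using Qpos by simp
  then have "(\<lambda>a. pp n c j a / complex_of_real (cnorm n (pp n c j))) = (\<lambda>a. w a / complex_of_real (cnorm n w))"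
    using Qpos unfolding ppw by (auto simp: field_simps)
  also have "\<dots> = gs n c j" by (simp add: gs_rec[of n c j] w_def Let_def)
  finally show ?case by simp
qed


lemma gram_schmidt_gs: "i < r \<Longrightarrow> gram_schmidt n r c i = gs n c i"
  by (simp add: gram_schmidt_def gs_list_nth)

lemma perturb_cong: "(\<And>i. i < r \<Longrightarrow> u i = u' i) \<Longrightarrow> perturb r X \<theta> u = perturb r X \<theta> u'"
  unfolding perturb_def by (intro ext arg_cong2[where f="(+)"] sum.cong refl) auto

lemma cinner_scale_l: "cinner n (\<lambda>a. z * p a) q = cnj z * cinner n p q"
  unfolding cinner_def by (simp add: sum_distrib_left mult.assoc)

lemma cinner_scale_r: "cinner n p (\<lambda>a. z * q a) = z * cinner n p q"
  unfolding cinner_def by (simp add: sum_distrib_left algebra_simps)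

lemma pp_orth:
  assumes on: "\<forall>j<r. \<forall>k<r. cinner n (c j) (c k) = (if j = k then 1 else 0)"
  shows "k < r \<Longrightarrow> pp n c k = (\<lambda>a. (\<Prod>j<k. qq n (pp n c j)) * c k a) \<and> qq n (pp n c k) \<noteq> 0"
proof (induction k rule: less_induct)
  case (less k)
  define P where "P = (\<Prod>j<k. qq n (pp n c j))"
  have qnz: "\<forall>j<k. qq n (pp n c j) \<noteq> 0"
  proof (intro allI impI)
    fix j assume jk: "j < k"
    then have "j < r" using less.prems by simp
    then show "qq n (pp n c j) \<noteq> 0" by (rule conjunct2[OF less.IH[OF jk]])
  qed
  have P0: "P \<noteq> 0" unfolding P_def using qnz by simp
  have ci: "cinner n (pp n c j) (c k) = 0" if "j < k" for j
  proof -
    have "j < r" using that less.prems by simp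
    then have "pp n c j = (\<lambda>a. (\<Prod>i<j. qq n (pp n c i)) * c j a)" by (rule conjunct1[OF less.IH[OF that]])
    then show ?thesis using on that less.prems by (simp add: cinner_scale_l)
  qed
  have ppk: "pp n c k = (\<lambda>a. P * c k a)"
    by (subst pp_rec) (simp add: ci P_def)
  have "qq n (pp n c k) = cnj P * P" unfolding ppk qq_def cinner_scale_l cinner_scale_r
    using on less.prems by simp
  also have "\<dots> \<noteq> 0" using P0 by simp
  finally show ?case using ppk P_def by simp
qed

lemma gs_orth:
  assumes on: "\<forall>j<r. \<forall>k<r. cinner n (c j) (c k) = (if j = k then 1 else 0)"
    and k: "k < r"
  shows "gs n c k = c k"
proof -
  have nz: "cnorm n (pp n c i) \<noteq> 0" if "i < r" for i
    using conjunct2[OF pp_orth[OF on that]] qq_cnorm[of n "pp n c i"] by auto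
  have g: "gs n c k = (\<lambda>a. pp n c k a / complex_of_real (cnorm n (pp n c k)))"
    using k nz by (intro gs_pp) auto
  define P where "P = (\<Prod>j<k. qq n (pp n c j))"
  have ppk: "pp n c k = (\<lambda>a. P * c k a)" using conjunct1[OF pp_orth[OF on k]] unfolding P_def .
  have qnz: "\<forall>j<k. qq n (pp n c j) \<noteq> 0"
  proof (intro allI impI)
    fix j assume jk: "j < k"
    then have "j < r" using k by simp
    then show "qq n (pp n c j) \<noteq> 0" by (rule conjunct2[OF pp_orth[OF on]])
  qed
  have P0: "P \<noteq> 0" unfolding P_def using qnz by simp
  have Pr: "P = complex_of_real (\<Prod>j<k. (cnorm n (pp n c j))\<^sup>2)"
    unfolding P_def qq_cnorm by simp
  have cn1: "cnorm n (c k) = 1"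
  proof -
    have "complex_of_real ((cnorm n (c k))\<^sup>2) = 1" using on k qq_cnorm[of n "c k"] by (simp add: qq_def)
    then have "(cnorm n (c k))\<^sup>2 = 1" by (metis of_real_eq_1_iff)
    moreover have "cnorm n (c k) \<ge> 0" unfolding cnorm_def by (simp add: sum_nonneg)
    ultimately show ?thesis by (simp add: power2_eq_1_iff)
  qed
  have "cnorm n (pp n c k) = cmod P" unfolding ppk cnorm_scale cn1 by simp
  moreover have "complex_of_real (cmod P) = P"
  proof -
    have "(\<Prod>j<k. (cnorm n (pp n c j))\<^sup>2) \<ge> 0" by (simp add: prod_nonneg)
    then have "cmod P = (\<Prod>j<k. (cnorm n (pp n c j))\<^sup>2)" unfolding Pr norm_of_real by simp
    then show ?thesis unfolding Pr by simp
  qed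
  ultimately show ?thesis using g ppk P0 by (auto simp: fun_eq_iff)
qed

lemma NM_eq:
  assumes D: "(\<Prod>i<r. qq n (pp n c i)) \<noteq> 0"
  shows "(\<Prod>i<r. qq n (pp n c i)) * complex_of_real (X a b)
      + (\<Sum>i<r. complex_of_real (\<theta> i) * (\<Prod>l\<in>{..<r} - {i}. qq n (pp n c l)) * pp n c i a * cnj (pp n c i b))
      - (if a = b then (\<Prod>i<r. qq n (pp n c i)) * \<mu> else 0)
    = (\<Prod>i<r. qq n (pp n c i)) * (perturb r X \<theta> (gram_schmidt n r c) a b - (if a = b then \<mu> else 0))"
proof -
  define D where "D = (\<Prod>i<r. qq n (pp n c i))"
  have nz: "qq n (pp n c i) \<noteq> 0" if "i < r" for i using D that by auto
  have nzn: "cnorm n (pp n c i) \<noteq> 0" if "i < r" for i using nz[OF that] qq_cnorm[of n "pp n c i"] by auto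
  have tm: "complex_of_real (\<theta> i) * (\<Prod>l\<in>{..<r} - {i}. qq n (pp n c l)) * pp n c i a * cnj (pp n c i b)
     = D * (complex_of_real (\<theta> i) * gram_schmidt n r c i a * cnj (gram_schmidt n r c i b))" if i: "i < r" for i
  proof -
    have g: "gram_schmidt n r c i = (\<lambda>a. pp n c i a / complex_of_real (cnorm n (pp n c i)))"
      using i nzn by (simp add: gram_schmidt_gs gs_pp)
    have Dr: "D = qq n (pp n c i) * (\<Prod>l\<in>{..<r} - {i}. qq n (pp n c l))"
      unfolding D_def using i by (subst prod.remove[of _ i]) auto
    show ?thesis unfolding g Dr qq_cnorm using nzn[OF i]
      by (simp add: field_simps power2_eq_square)
  qed
  have "D * complex_of_real (X a b) + (\<Sum>i<r. complex_of_real (\<theta> i) * (\<Prod>l\<in>{..<r} - {i}. qq n (pp n c l)) * pp n c i a * cnj (pp n c i b))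
      - (if a = b then D * \<mu> else 0)
    = D * complex_of_real (X a b) + (\<Sum>i<r. D * (complex_of_real (\<theta> i) * gram_schmidt n r c i a * cnj (gram_schmidt n r c i b)))
      - (if a = b then D * \<mu> else 0)"
    using tm by (intro arg_cong2[where f="(-)"] arg_cong2[where f="(+)"] sum.cong refl) auto
  also have "\<dots> = D * (perturb r X \<theta> (gram_schmidt n r c) a b - (if a = b then \<mu> else 0))"
    unfolding perturb_def by (simp add: sum_distrib_left algebra_simps)
  finally show ?thesis unfolding D_def .
qed


lemma cpoly_null:
  fixes F :: "('v \<Rightarrow> 'b::euclidean_space) \<Rightarrow> complex"
  assumes base: "\<And>g y0. polyf {()} g \<Longrightarrow> g (\<lambda>_. y0) \<noteq> 0 \<Longrightarrow> {y. g (\<lambda>_. y) = 0} \<in> null_sets (lborel::'b measure)"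
    and fin: "finite V" and cp: "cpoly V F"
    and g0: "g0 \<in> space (PiM V (\<lambda>_. lborel::'b measure))" and F0: "F g0 \<noteq> 0"
  shows "\<exists>N\<in>null_sets (PiM V (\<lambda>_. lborel::'b measure)). {g\<in>space (PiM V (\<lambda>_. lborel::'b measure)). F g = 0} \<subseteq> N"
proof (cases "Re (F g0) = 0")
  case True
  then have "Im (F g0) \<noteq> 0" using F0 by (auto simp: complex_eq_iff)
  then have "{g\<in>space (PiM V (\<lambda>_. lborel::'b measure)). Im (F g) = 0} \<in> null_sets (PiM V (\<lambda>_. lborel))"
    using cp g0 unfolding cpoly_def by (intro polyf_null_gen[OF base fin]) auto
  then show ?thesis by (intro bexI[of _ "{g\<in>space (PiM V (\<lambda>_. lborel::'b measure)). Im (F g) = 0}"]) auto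
next
  case False
  then have "{g\<in>space (PiM V (\<lambda>_. lborel::'b measure)). Re (F g) = 0} \<in> null_sets (PiM V (\<lambda>_. lborel))"
    using cp g0 unfolding cpoly_def by (intro polyf_null_gen[OF base fin]) auto
  then show ?thesis by (intro bexI[of _ "{g\<in>space (PiM V (\<lambda>_. lborel::'b measure)). Re (F g) = 0}"]) auto
qed

lemma cpoly_cinner:
  assumes "\<And>a. a < n \<Longrightarrow> cpoly V (\<lambda>g. P g a)" "\<And>a. a < n \<Longrightarrow> cpoly V (\<lambda>g. Q g a)"
  shows "cpoly V (\<lambda>g. cinner n (P g) (Q g))"
  unfolding cinner_def using assms by (intro cpoly_sum cpoly_mult cpoly_cnj) auto

lemma cpoly_pp:
  assumes hc: "\<And>j a. j < r \<Longrightarrow> a < n \<Longrightarrow> cpoly V (\<lambda>g. c g j a)"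
  shows "k < r \<Longrightarrow> a < n \<Longrightarrow> cpoly V (\<lambda>g. pp n (c g) k a)"
proof (induction k arbitrary: a rule: less_induct)
  case (less k)
  have IH: "\<And>j a. j < k \<Longrightarrow> a < n \<Longrightarrow> cpoly V (\<lambda>g. pp n (c g) j a)"
    using less by auto
  have e: "(\<lambda>g. pp n (c g) k a) = (\<lambda>g. (\<Prod>j<k. qq n (pp n (c g) j)) * c g k a
      - (\<Sum>j<k. cinner n (pp n (c g) j) (c g k) * (\<Prod>i\<in>{..<k} - {j}. qq n (pp n (c g) i)) * pp n (c g) j a))"
    by (simp only: pp_rec[of n _ k])
  show ?case unfolding e qq_def
    using less.prems IH hc
    by (intro cpoly_diff cpoly_mult cpoly_sum cpoly_prod cpoly_cinner) auto
qed

lemma perturb_cong2: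
  assumes "\<And>i a. i < r \<Longrightarrow> a < n \<Longrightarrow> u i a = u' i a" "a < n" "b < n"
  shows "perturb r X \<theta> u a b = perturb r X \<theta> u' a b"
  unfolding perturb_def using assms by (intro arg_cong2[where f="(+)"] sum.cong refl) auto

lemma det_cong_n:
  assumes "\<And>a b. a < n \<Longrightarrow> b < n \<Longrightarrow> f a b = f' a b"
  shows "det (mat n n (\<lambda>(a,b). f a b)) = det (mat n n (\<lambda>(a,b). f' a b))"
  using assms by (intro arg_cong[where f=det] eq_matI) auto


lemma cpoly_divc[intro]: "cpoly V F \<Longrightarrow> cpoly V (\<lambda>x. F x / c)"
proof -
  assume "cpoly V F"
  then have "cpoly V (\<lambda>x. F x * (1 / c))" by (intro cpoly_mult cpoly_const)
  then show ?thesis by simp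
qed

lemma cpoly_if: "cpoly V F \<Longrightarrow> cpoly V G \<Longrightarrow> cpoly V (\<lambda>x. if P then F x else G x)"
  by (cases P) auto

lemma NM_det:
  assumes D: "(\<Prod>i<r. qq n (pp n c i)) \<noteq> 0"
  shows "det (mat n n (\<lambda>(a,b). (\<Prod>i<r. qq n (pp n c i)) * complex_of_real (X a b)
      + (\<Sum>i<r. complex_of_real (\<theta> i) * (\<Prod>l\<in>{..<r} - {i}. qq n (pp n c l)) * pp n c i a * cnj (pp n c i b))
      - (if a = b then (\<Prod>i<r. qq n (pp n c i)) * \<mu> else 0)))
    = (\<Prod>i<r. qq n (pp n c i)) ^ n * det (mat n n (\<lambda>(a,b). perturb r X \<theta> (gram_schmidt n r c) a b - (if a = b then \<mu> else 0)))"
proof -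
  have "mat n n (\<lambda>(a,b). (\<Prod>i<r. qq n (pp n c i)) * complex_of_real (X a b)
      + (\<Sum>i<r. complex_of_real (\<theta> i) * (\<Prod>l\<in>{..<r} - {i}. qq n (pp n c l)) * pp n c i a * cnj (pp n c i b))
      - (if a = b then (\<Prod>i<r. qq n (pp n c i)) * \<mu> else 0))
    = (\<Prod>i<r. qq n (pp n c i)) \<cdot>\<^sub>m mat n n (\<lambda>(a,b). perturb r X \<theta> (gram_schmidt n r c) a b - (if a = b then \<mu> else 0))"
    by (rule eq_matI) (auto simp: NM_eq[OF D])
  then show ?thesis by simp
qed

context symx begin

lemma good_common:
  fixes r :: nat and \<theta> :: "nat \<Rightarrow> real" and idx :: "nat \<Rightarrow> nat"
  assumes r1: "1 \<le> r" and rn: "r < n"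
    and theta: "\<forall>i<r. \<theta> i \<noteq> 0"
    and idx_range: "\<forall>k<r - 1. idx k < n"
    and idx_inj: "inj_on idx {..<r - 1}"
    and H: "(\<lambda>k. lam (idx k) + \<theta> k) ` {..<r - 1} \<inter> lam ` {..<n} = {}"
    and j: "j < n"
  shows "\<exists>E \<kappa>. (\<forall>k<n. \<forall>k'<n. (\<Sum>a<n. E k a * E k' a) = (if k = k' then 1 else 0)) \<and>
     (\<forall>i<r. \<kappa> i < n) \<and> inj_on \<kappa> {..<r} \<and>
     \<not> is_eigenvalue n (perturb r X \<theta> (\<lambda>i a. complex_of_real (E (\<kappa> i) a))) (complex_of_real (lam j))"
proof -
  obtain E where Eeig: "\<forall>k<n. \<forall>a<n. (\<Sum>b<n. X a b * E k b) = lam k * E k a"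
    and Eon: "\<forall>k<n. \<forall>k'<n. (\<Sum>a<n. E k a * E k' a) = (if k = k' then 1 else 0)"
    using ebasis by blast
  obtain \<kappa> where kr: "\<forall>i<r. \<kappa> i < n" and kinj: "inj_on \<kappa> {..<r}"
    and cj: "\<exists>i<r. \<kappa> i = j \<and> \<theta> i \<noteq> 0" and ck: "\<forall>i<r. \<kappa> i \<noteq> j \<longrightarrow> lam (\<kappa> i) + \<theta> i \<noteq> lam j"
    using choose_kappa[OF r1 rn dist theta idx_range idx_inj H j] by blast
  have "\<not> is_eigenvalue n (perturb r X \<theta> (\<lambda>i a. complex_of_real (E (\<kappa> i) a))) (complex_of_real (lam j))"
    by (rule key_noneig[OF sym Eeig Eon dist kr kinj j cj ck])
  then show ?thesis using Eon kr kinj by blast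
qed

lemma scaled_good:
  fixes emb :: "'b::euclidean_space \<Rightarrow> complex" and lift :: "real \<Rightarrow> 'b"
    and r :: nat and \<theta> :: "nat \<Rightarrow> real" and idx :: "nat \<Rightarrow> nat"
  assumes r1: "1 \<le> r" and rn: "r < n"
    and theta: "\<forall>i<r. \<theta> i \<noteq> 0"
    and idx_range: "\<forall>k<r - 1. idx k < n"
    and idx_inj: "inj_on idx {..<r - 1}"
    and H: "(\<lambda>k. lam (idx k) + \<theta> k) ` {..<r - 1} \<inter> lam ` {..<n} = {}"
    and hemb: "\<And>v. v \<in> {..<n}\<times>{..<r} \<Longrightarrow> cpoly ({..<n}\<times>{..<r}) (\<lambda>g. emb (g v))"
    and hlift: "\<And>t. emb (lift t) = complex_of_real t"
    and j: "j < n"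
  shows "\<exists>F D. cpoly ({..<n}\<times>{..<r}) F \<and> cpoly ({..<n}\<times>{..<r}) D \<and>
     (\<forall>g. is_eigenvalue n (perturb r X \<theta> (scaled_cols n (\<lambda>i a. emb (g (a,i))))) (complex_of_real (lam j)) \<longrightarrow> F g = 0 \<or> D g = 0) \<and>
     (\<exists>g0\<in>space (PiM ({..<n}\<times>{..<r}) (\<lambda>_. lborel::'b measure)). F g0 \<noteq> 0 \<and> D g0 \<noteq> 0)"
proof -
  let ?V = "{..<n}\<times>{..<r}"
  obtain E \<kappa> where Eon: "\<forall>k<n. \<forall>k'<n. (\<Sum>a<n. E k a * E k' a) = (if k = k' then 1 else 0)"
    and kr: "\<forall>i<r. \<kappa> i < n" and kinj: "inj_on \<kappa> {..<r}"
    and ne: "\<not> is_eigenvalue n (perturb r X \<theta> (\<lambda>i a. complex_of_real (E (\<kappa> i) a))) (complex_of_real (lam j))"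
    using good_common[OF r1 rn theta idx_range idx_inj H j] by blast
  define F where "F g = det (mat n n (\<lambda>(a,b). perturb r X \<theta> (scaled_cols n (\<lambda>i a. emb (g (a,i)))) a b
      - (if a = b then complex_of_real (lam j) else 0)))" for g :: "nat \<times> nat \<Rightarrow> 'b"
  have cF: "cpoly ?V F"
    unfolding F_def
  proof (rule cpoly_det)
    fix a b assume ab: "a < n" "b < n"
    show "cpoly ?V (\<lambda>g. perturb r X \<theta> (scaled_cols n (\<lambda>i a. emb (g (a,i)))) a b - (if a = b then complex_of_real (lam j) else 0))"
      unfolding perturb_def scaled_cols_def using ab hemb
      by (intro cpoly_diff cpoly_add cpoly_sum cpoly_mult cpoly_cnj cpoly_const cpoly_divc) auto
  qed
  have bad: "\<forall>g. is_eigenvalue n (perturb r X \<theta> (scaled_cols n (\<lambda>i a. emb (g (a,i))))) (complex_of_real (lam j)) \<longrightarrow> F g = 0 \<or> (\<lambda>g. 1) g = 0"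
    unfolding F_def eig_det by simp
  define g0 where "g0 = restrict (\<lambda>(a,i). lift (sqrt (real n) * E (\<kappa> i) a)) ?V"
  have g0s: "g0 \<in> space (PiM ?V (\<lambda>_. lborel::'b measure))" unfolding g0_def by (simp add: space_PiM)
  have sc: "scaled_cols n (\<lambda>i a. emb (g0 (a,i))) i a = complex_of_real (E (\<kappa> i) a)" if "i < r" "a < n" for i a
  proof -
    have "real n > 0" using rn by simp
    then show ?thesis using that unfolding scaled_cols_def g0_def by (simp add: field_simps hlift)
  qed
  have "F g0 = det (mat n n (\<lambda>(a,b). perturb r X \<theta> (\<lambda>i a. complex_of_real (E (\<kappa> i) a)) a b
      - (if a = b then complex_of_real (lam j) else 0)))"
    unfolding F_def by (intro det_cong_n arg_cong2[where f="(-)"] perturb_cong2 sc refl)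
  also have "\<dots> \<noteq> 0" using ne unfolding eig_det .
  finally have F0: "F g0 \<noteq> 0" .
  define D where "D = (\<lambda>g::nat\<times>nat\<Rightarrow>'b. 1::complex)"
  have cD: "cpoly ?V D" unfolding D_def by (rule cpoly_const)
  have bad': "\<forall>g. is_eigenvalue n (perturb r X \<theta> (scaled_cols n (\<lambda>i a. emb (g (a,i))))) (complex_of_real (lam j)) \<longrightarrow> F g = 0 \<or> D g = 0"
    using bad unfolding D_def .
  have ex: "\<exists>g0\<in>space (PiM ?V (\<lambda>_. lborel::'b measure)). F g0 \<noteq> 0 \<and> D g0 \<noteq> 0"
    using g0s F0 unfolding D_def by auto
  show ?thesis using cF cD bad' ex by blast
qed

lemma gs_good:
  fixes emb :: "'b::euclidean_space \<Rightarrow> complex" and lift :: "real \<Rightarrow> 'b"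
    and r :: nat and \<theta> :: "nat \<Rightarrow> real" and idx :: "nat \<Rightarrow> nat"
  assumes r1: "1 \<le> r" and rn: "r < n"
    and theta: "\<forall>i<r. \<theta> i \<noteq> 0"
    and idx_range: "\<forall>k<r - 1. idx k < n"
    and idx_inj: "inj_on idx {..<r - 1}"
    and H: "(\<lambda>k. lam (idx k) + \<theta> k) ` {..<r - 1} \<inter> lam ` {..<n} = {}"
    and hemb: "\<And>v. v \<in> {..<n}\<times>{..<r} \<Longrightarrow> cpoly ({..<n}\<times>{..<r}) (\<lambda>g. emb (g v))"
    and hlift: "\<And>t. emb (lift t) = complex_of_real t"
    and j: "j < n"
  shows "\<exists>F D. cpoly ({..<n}\<times>{..<r}) F \<and> cpoly ({..<n}\<times>{..<r}) D \<and>
     (\<forall>g. is_eigenvalue n (perturb r X \<theta> (gram_schmidt n r (\<lambda>i a. emb (g (a,i))))) (complex_of_real (lam j)) \<longrightarrow> F g = 0 \<or> D g = 0) \<and>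
     (\<exists>g0\<in>space (PiM ({..<n}\<times>{..<r}) (\<lambda>_. lborel::'b measure)). F g0 \<noteq> 0 \<and> D g0 \<noteq> 0)"
proof -
  let ?V = "{..<n}\<times>{..<r}"
  obtain E \<kappa> where Eon: "\<forall>k<n. \<forall>k'<n. (\<Sum>a<n. E k a * E k' a) = (if k = k' then 1 else 0)"
    and kr: "\<forall>i<r. \<kappa> i < n" and kinj: "inj_on \<kappa> {..<r}"
    and ne: "\<not> is_eigenvalue n (perturb r X \<theta> (\<lambda>i a. complex_of_real (E (\<kappa> i) a))) (complex_of_real (lam j))"
    using good_common[OF r1 rn theta idx_range idx_inj H j] by blast
  define C where "C g = (\<lambda>i a. emb (g (a,i)))" for g :: "nat \<times> nat \<Rightarrow> 'b"
  have hc: "\<And>i a. i < r \<Longrightarrow> a < n \<Longrightarrow> cpoly ?V (\<lambda>g. C g i a)"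
    unfolding C_def using hemb by auto
  have cpp: "\<And>k a. k < r \<Longrightarrow> a < n \<Longrightarrow> cpoly ?V (\<lambda>g. pp n (C g) k a)"
    by (rule cpoly_pp[OF hc])
  have cqq: "\<And>k. k < r \<Longrightarrow> cpoly ?V (\<lambda>g. qq n (pp n (C g) k))"
    unfolding qq_def using cpp by (intro cpoly_cinner) auto
  define D where "D g = (\<Prod>i<r. qq n (pp n (C g) i))" for g
  define F where "F g = det (mat n n (\<lambda>(a,b). (\<Prod>i<r. qq n (pp n (C g) i)) * complex_of_real (X a b)
      + (\<Sum>i<r. complex_of_real (\<theta> i) * (\<Prod>l\<in>{..<r} - {i}. qq n (pp n (C g) l)) * pp n (C g) i a * cnj (pp n (C g) i b))
      - (if a = b then (\<Prod>i<r. qq n (pp n (C g) i)) * complex_of_real (lam j) else 0)))" for g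
  have cD: "cpoly ?V D" unfolding D_def using cqq by (intro cpoly_prod) auto
  have cF: "cpoly ?V F"
    unfolding F_def
  proof (rule cpoly_det)
    fix a b assume ab: "a < n" "b < n"
    show "cpoly ?V (\<lambda>g. (\<Prod>i<r. qq n (pp n (C g) i)) * complex_of_real (X a b)
      + (\<Sum>i<r. complex_of_real (\<theta> i) * (\<Prod>l\<in>{..<r} - {i}. qq n (pp n (C g) l)) * pp n (C g) i a * cnj (pp n (C g) i b))
      - (if a = b then (\<Prod>i<r. qq n (pp n (C g) i)) * complex_of_real (lam j) else 0))"
      using ab cqq cpp
      by (intro cpoly_diff cpoly_add cpoly_sum cpoly_mult cpoly_cnj cpoly_const cpoly_prod cpoly_if) auto
  qed
  have bad: "\<forall>g. is_eigenvalue n (perturb r X \<theta> (gram_schmidt n r (\<lambda>i a. emb (g (a,i))))) (complex_of_real (lam j)) \<longrightarrow> F g = 0 \<or> D g = 0"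
  proof (intro allI impI)
    fix g
    assume ev: "is_eigenvalue n (perturb r X \<theta> (gram_schmidt n r (\<lambda>i a. emb (g (a,i))))) (complex_of_real (lam j))"
    show "F g = 0 \<or> D g = 0"
    proof (cases "D g = 0")
      case False
      then have "F g = D g ^ n * det (mat n n (\<lambda>(a,b). perturb r X \<theta> (gram_schmidt n r (C g)) a b - (if a = b then complex_of_real (lam j) else 0)))"
        unfolding F_def D_def by (rule NM_det)
      also have "\<dots> = 0" using ev unfolding eig_det C_def by simp
      finally show ?thesis by simp
    qed simp
  qed
  define g0 where "g0 = restrict (\<lambda>(a,i). lift (E (\<kappa> i) a)) ?V"
  have g0s: "g0 \<in> space (PiM ?V (\<lambda>_. lborel::'b measure))" unfolding g0_def by (simp add: space_PiM)
  have c0: "C g0 i a = complex_of_real (E (\<kappa> i) a)" if "i < r" "a < n" for i a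
    using that unfolding C_def g0_def by (simp add: hlift)
  have on: "\<forall>i<r. \<forall>k<r. cinner n (C g0 i) (C g0 k) = (if i = k then 1 else 0)"
  proof (intro allI impI)
    fix i k assume ik: "i < r" "k < r"
    have "cinner n (C g0 i) (C g0 k) = complex_of_real (\<Sum>a<n. E (\<kappa> i) a * E (\<kappa> k) a)"
      unfolding cinner_def of_real_sum using ik by (intro sum.cong) (auto simp: c0)
    also have "\<dots> = (if i = k then 1 else 0)"
      using Eon kr ik kinj by (auto dest: inj_onD)
    finally show "cinner n (C g0 i) (C g0 k) = (if i = k then 1 else 0)" .
  qed
  have D0: "D g0 \<noteq> 0"
    unfolding D_def using conjunct2[OF pp_orth[OF on]] by simp
  have "F g0 = D g0 ^ n * det (mat n n (\<lambda>(a,b). perturb r X \<theta> (gram_schmidt n r (C g0)) a b - (if a = b then complex_of_real (lam j) else 0)))"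
    unfolding F_def D_def by (rule NM_det) (use D0 in \<open>simp add: D_def\<close>)
  also have "det (mat n n (\<lambda>(a,b). perturb r X \<theta> (gram_schmidt n r (C g0)) a b - (if a = b then complex_of_real (lam j) else 0)))
     = det (mat n n (\<lambda>(a,b). perturb r X \<theta> (\<lambda>i a. complex_of_real (E (\<kappa> i) a)) a b - (if a = b then complex_of_real (lam j) else 0)))"
  proof (intro det_cong_n arg_cong2[where f="(-)"] perturb_cong2 refl)
    fix i a assume "i < r" "a < n"
    then show "gram_schmidt n r (C g0) i a = complex_of_real (E (\<kappa> i) a)"
      using gs_orth[OF on] by (simp add: gram_schmidt_gs c0)
  qed
  finally have F0: "F g0 \<noteq> 0" using D0 ne unfolding eig_det by simp
  have bad': "\<forall>g. is_eigenvalue n (perturb r X \<theta> (gram_schmidt n r (\<lambda>i a. emb (g (a,i))))) (complex_of_real (lam j)) \<longrightarrow> F g = 0 \<or> D g = 0"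
    by (rule bad)
  have ex: "\<exists>g0\<in>space (PiM ?V (\<lambda>_. lborel::'b measure)). F g0 \<noteq> 0 \<and> D g0 \<noteq> 0"
    using g0s F0 D0 by auto
  show ?thesis using cF cD bad' ex by blast
qed

end


context symx begin

lemma generic_null:
  fixes A :: "('v \<Rightarrow> 'b::euclidean_space) \<Rightarrow> nat \<Rightarrow> nat \<Rightarrow> complex"
  assumes base: "\<And>g y0. polyf {()} g \<Longrightarrow> g (\<lambda>_. y0) \<noteq> 0 \<Longrightarrow> {y. g (\<lambda>_. y) = 0} \<in> null_sets (lborel::'b measure)"
    and fin: "finite V"
    and hU: "\<And>j. j < n \<Longrightarrow> \<exists>F D. cpoly V F \<and> cpoly V D \<and>
       (\<forall>g. is_eigenvalue n (A g) (complex_of_real (lam j)) \<longrightarrow> F g = 0 \<or> D g = 0) \<and>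
       (\<exists>g0\<in>space (PiM V (\<lambda>_. lborel::'b measure)). F g0 \<noteq> 0 \<and> D g0 \<noteq> 0)"
  shows "{g \<in> space (completion (PiM V (\<lambda>_. lborel::'b measure))). shares_eigenvalue n (A g) X}
     \<in> null_sets (completion (PiM V (\<lambda>_. lborel::'b measure)))"
proof -
  let ?M = "PiM V (\<lambda>_. lborel::'b measure)"
  have ex: "\<forall>j<n. \<exists>N. N \<in> null_sets ?M \<and> {g\<in>space ?M. is_eigenvalue n (A g) (complex_of_real (lam j))} \<subseteq> N"
  proof (intro allI impI)
    fix j assume j: "j < n"
    from hU[OF j] obtain F where "\<exists>D. cpoly V F \<and> cpoly V D \<and>
       (\<forall>g. is_eigenvalue n (A g) (complex_of_real (lam j)) \<longrightarrow> F g = 0 \<or> D g = 0) \<and>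
       (\<exists>g0\<in>space ?M. F g0 \<noteq> 0 \<and> D g0 \<noteq> 0)" by (rule exE)
    then obtain D where P: "cpoly V F \<and> cpoly V D \<and>
       (\<forall>g. is_eigenvalue n (A g) (complex_of_real (lam j)) \<longrightarrow> F g = 0 \<or> D g = 0) \<and>
       (\<exists>g0\<in>space ?M. F g0 \<noteq> 0 \<and> D g0 \<noteq> 0)" by (rule exE)
    have cF: "cpoly V F" using P by (rule conjunct1)
    have cD: "cpoly V D" using P[THEN conjunct2] by (rule conjunct1)
    have bad: "\<forall>g. is_eigenvalue n (A g) (complex_of_real (lam j)) \<longrightarrow> F g = 0 \<or> D g = 0"
      using P[THEN conjunct2, THEN conjunct2] by (rule conjunct1)
    have g0: "\<exists>g0\<in>space ?M. F g0 \<noteq> 0 \<and> D g0 \<noteq> 0"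
      using P[THEN conjunct2, THEN conjunct2] by (rule conjunct2)
    from g0 obtain g0 where g0s: "g0 \<in> space ?M" and FD0: "F g0 \<noteq> 0 \<and> D g0 \<noteq> 0" by (rule bexE)
    have F0: "F g0 \<noteq> 0" using FD0 by (rule conjunct1)
    have D0: "D g0 \<noteq> 0" using FD0 by (rule conjunct2)
    have exF: "\<exists>N\<in>null_sets ?M. {g\<in>space ?M. F g = 0} \<subseteq> N"
      by (rule cpoly_null[OF _ fin cF g0s F0], rule base, assumption+)
    from exF obtain NF where NF: "NF \<in> null_sets ?M" "{g\<in>space ?M. F g = 0} \<subseteq> NF" by (rule bexE)
    have exD: "\<exists>N\<in>null_sets ?M. {g\<in>space ?M. D g = 0} \<subseteq> N"
      by (rule cpoly_null[OF _ fin cD g0s D0], rule base, assumption+)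
    from exD obtain ND where ND: "ND \<in> null_sets ?M" "{g\<in>space ?M. D g = 0} \<subseteq> ND" by (rule bexE)
    have "NF \<union> ND \<in> null_sets ?M" using NF ND by auto
    moreover have "{g\<in>space ?M. is_eigenvalue n (A g) (complex_of_real (lam j))} \<subseteq> NF \<union> ND"
    proof
      fix g assume g: "g \<in> {g\<in>space ?M. is_eigenvalue n (A g) (complex_of_real (lam j))}"
      then have "F g = 0 \<or> D g = 0" using bad by simp
      then show "g \<in> NF \<union> ND"
      proof
        assume "F g = 0" then show ?thesis using g NF(2) by blast
      next
        assume "D g = 0" then show ?thesis using g ND(2) by blast
      qed
    qed
    ultimately show "\<exists>N. N \<in> null_sets ?M \<and> {g\<in>space ?M. is_eigenvalue n (A g) (complex_of_real (lam j))} \<subseteq> N"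
      by blast
  qed
  have "\<forall>j. \<exists>N. j < n \<longrightarrow> N \<in> null_sets ?M \<and> {g\<in>space ?M. is_eigenvalue n (A g) (complex_of_real (lam j))} \<subseteq> N"
    using ex by simp
  then obtain Nf where Nf0: "\<forall>j. j < n \<longrightarrow> Nf j \<in> null_sets ?M \<and> {g\<in>space ?M. is_eigenvalue n (A g) (complex_of_real (lam j))} \<subseteq> Nf j"
    by (rule choice[THEN exE])
  have Nf: "\<And>j. j < n \<Longrightarrow> Nf j \<in> null_sets ?M"
    "\<And>j. j < n \<Longrightarrow> {g\<in>space ?M. is_eigenvalue n (A g) (complex_of_real (lam j))} \<subseteq> Nf j"
    using Nf0 by auto
  have "(\<Union>j\<in>{..<n}. Nf j) \<in> null_sets ?M"
    using Nf(1) by (intro null_sets.finite_UN) auto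
  moreover have "{g \<in> space (completion ?M). shares_eigenvalue n (A g) X} \<subseteq> (\<Union>j\<in>{..<n}. Nf j)"
  proof
    fix g assume g: "g \<in> {g \<in> space (completion ?M). shares_eigenvalue n (A g) X}"
    then obtain \<mu> where m1: "is_eigenvalue n (A g) \<mu>" and m2: "is_eigenvalue n (\<lambda>a b. complex_of_real (X a b)) \<mu>"
      unfolding shares_eigenvalue_def by blast
    obtain j where j: "j < n" "\<mu> = complex_of_real (lam j)" using real_eig[OF m2] by blast
    have "g \<in> {g\<in>space ?M. is_eigenvalue n (A g) (complex_of_real (lam j))}"
      using g m1 j by simp
    then show "g \<in> (\<Union>j\<in>{..<n}. Nf j)" using Nf(2)[OF j(1)] j(1) by blast
  qed
  ultimately show ?thesis by (intro null_sets_completion_iff2[THEN iffD2] bexI)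
qed

end

theorem lemma11p2:
  fixes n r :: nat and X :: "nat \<Rightarrow> nat \<Rightarrow> real" and lam \<theta> :: "nat \<Rightarrow> real"
    and idx :: "nat \<Rightarrow> nat"
  assumes "1 \<le> r" and "r < n"
    and sym: "\<forall>a<n. \<forall>b<n. X a b = X b a"
    and eig: "{\<mu>. is_eigenvalue n X \<mu>} = lam ` {..<n}"
    and dist: "inj_on lam {..<n}"
    and theta: "\<forall>i<r. \<theta> i \<noteq> 0"
    and idx_range: "\<forall>k<r - 1. idx k < n"
    and idx_inj: "inj_on idx {..<r - 1}"
    and H: "(\<lambda>k. lam (idx k) + \<theta> k) ` {..<r - 1} \<inter> lam ` {..<n} = {}"
  shows
    "{g \<in> space (leb_R n r).
        shares_eigenvalue n (perturb r X \<theta> (scaled_cols n (cols_R g))) X} \<in> null_sets (leb_R n r)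
   \<and> {g \<in> space (leb_R n r). lin_indep_cols n r (\<lambda>j a. g (a, j)) \<and>
        shares_eigenvalue n (perturb r X \<theta> (gram_schmidt n r (cols_R g))) X} \<in> null_sets (leb_R n r)
   \<and> {g \<in> space (leb_C n r).
        shares_eigenvalue n (perturb r X \<theta> (scaled_cols n (cols_C g))) X} \<in> null_sets (leb_C n r)
   \<and> {g \<in> space (leb_C n r). lin_indep_cols n r (cols_C g) \<and>
        shares_eigenvalue n (perturb r X \<theta> (gram_schmidt n r (cols_C g))) X} \<in> null_sets (leb_C n r)"
proof -
  interpret symx n X lam using sym eig dist by unfold_locales
  let ?V = "{..<n}\<times>{..<r}"
  have fin: "finite ?V" by simp
  have hembR: "cpoly ?V (\<lambda>g. complex_of_real (g v))" if "v \<in> ?V" for v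
  proof -
    have "polyf ?V (\<lambda>g::nat\<times>nat\<Rightarrow>real. g v \<bullet> 1)" using that by (intro polyf.pvar) auto
    then show ?thesis by (intro cpoly_of_real) simp
  qed
  have hembC: "cpoly ?V (\<lambda>g. g v)" if "v \<in> ?V" for v
  proof -
    have p1: "polyf ?V (\<lambda>g::nat\<times>nat\<Rightarrow>complex. g v \<bullet> 1)"
      by (rule polyf.pvar) (use that in \<open>auto simp: Basis_complex_def\<close>)
    have p2: "polyf ?V (\<lambda>g::nat\<times>nat\<Rightarrow>complex. g v \<bullet> \<i>)"
      by (rule polyf.pvar) (use that in \<open>auto simp: Basis_complex_def\<close>)
    have "polyf ?V (\<lambda>g::nat\<times>nat\<Rightarrow>complex. Re (g v))" using p1 by simp
    moreover have "polyf ?V (\<lambda>g::nat\<times>nat\<Rightarrow>complex. Im (g v))" using p2 by simp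
    ultimately show ?thesis unfolding cpoly_def by simp
  qed
  have liftR: "\<And>t. complex_of_real (id t) = complex_of_real t" by simp
  have liftC: "\<And>t. id (complex_of_real t) = complex_of_real t" by simp
  have embR: "\<And>v. v \<in> ?V \<Longrightarrow> cpoly ?V (\<lambda>g. complex_of_real (g v))" by (rule hembR)
  have embC: "\<And>v. v \<in> ?V \<Longrightarrow> cpoly ?V (\<lambda>g. id (g v))" using hembC by simp
  have baseR: "\<And>g y0. polyf {()} g \<Longrightarrow> g (\<lambda>_. y0) \<noteq> 0 \<Longrightarrow> {y. g (\<lambda>_. y) = 0} \<in> null_sets (lborel::real measure)"
    by (rule base_real)
  have baseC: "\<And>g y0. polyf {()} g \<Longrightarrow> g (\<lambda>_. y0) \<noteq> 0 \<Longrightarrow> {y. g (\<lambda>_. y) = 0} \<in> null_sets (lborel::complex measure)"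
    by (rule base_euclid)
  have colsR: "cols_R g = (\<lambda>i a. complex_of_real (g (a,i)))" for g by (simp add: cols_R_def)
  have colsC: "cols_C g = (\<lambda>i a. id (g (a,i)))" for g by (simp add: cols_C_def)
  have 1: "{g \<in> space (leb_R n r). shares_eigenvalue n (perturb r X \<theta> (scaled_cols n (cols_R g))) X} \<in> null_sets (leb_R n r)"
    unfolding leb_R_def colsR
    by (rule generic_null[OF _ fin], erule base_real, assumption, rule scaled_good[OF assms(1,2) theta idx_range idx_inj H embR liftR])
  have 2: "{g \<in> space (leb_R n r). shares_eigenvalue n (perturb r X \<theta> (gram_schmidt n r (cols_R g))) X} \<in> null_sets (leb_R n r)"
    unfolding leb_R_def colsR
    by (rule generic_null[OF _ fin], erule base_real, assumption, rule gs_good[OF assms(1,2) theta idx_range idx_inj H embR liftR])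
  have 3: "{g \<in> space (leb_C n r). shares_eigenvalue n (perturb r X \<theta> (scaled_cols n (cols_C g))) X} \<in> null_sets (leb_C n r)"
    unfolding leb_C_def colsC
    by (rule generic_null[OF _ fin], erule base_euclid, assumption, rule scaled_good[OF assms(1,2) theta idx_range idx_inj H embC liftC])
  have 4: "{g \<in> space (leb_C n r). shares_eigenvalue n (perturb r X \<theta> (gram_schmidt n r (cols_C g))) X} \<in> null_sets (leb_C n r)"
    unfolding leb_C_def colsC
    by (rule generic_null[OF _ fin], erule base_euclid, assumption, rule gs_good[OF assms(1,2) theta idx_range idx_inj H embC liftC])
  have two': "{g \<in> space (leb_R n r). lin_indep_cols n r (\<lambda>j a. g (a, j)) \<and>
        shares_eigenvalue n (perturb r X \<theta> (gram_schmidt n r (cols_R g))) X} \<in> null_sets (leb_R n r)"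
    using 2 unfolding leb_R_def by (rule null_sets_completion_subset[rotated]) auto
  have four': "{g \<in> space (leb_C n r). lin_indep_cols n r (cols_C g) \<and>
        shares_eigenvalue n (perturb r X \<theta> (gram_schmidt n r (cols_C g))) X} \<in> null_sets (leb_C n r)"
    using 4 unfolding leb_C_def by (rule null_sets_completion_subset[rotated]) auto
  show ?thesis by (rule conjI[OF 1 conjI[OF two' conjI[OF 3 four']]])
qed


end
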